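(* Let $0<s<\tfrac12$, and let $$\gamma_1(s)=\frac{1}{2}\left(\frac{2^{1-2s}-1}{1-2^{-2s}}\right),\qquad \gamma_2(s)=\frac{2-2^{-2s}}{1-2^{-2s}}.$$ Then: (1) $E^\delta_s(h,\tilde h)=0$ for all $h\neq\tilde h$ in $\mathcal{H}$. (2) $Q^\delta_s(h,\tilde h)=0$ for all $h\neq\tilde h$ in $\mathcal{H}$. (3) $\mathcal{E}^\delta_s(\varphi)=\gamma_2(s)\sum_{h\in\mathcal{H}}\frac{|\langle\varphi,h\rangle|^2}{|I(h)|^{2s}}$ for every $\varphi\in\mathcal{S}(\mathcal{H})$. (4) $\mathcal{Q}^\delta_s(\varphi)=\gamma_1(s)\sum_{h\in\mathcal{H}}|I(h)|^{2s}|\langle\varphi,h\rangle|^2$ for every $\varphi\in\mathcal{S}(\mathcal{H})$.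
   Context: Let $\mathbb{R}^+=(0,\infty)$. Dyadic intervals. $\mathcal{D}$ is the family of dyadic intervals $I^j_k=(k2^{-j},(k+1)2^{-j}]$ with $j\in\mathbb{Z}$ and $k$ a nonnegative integer. Dyadic distance. $\delta(x,y)=\inf\{|I|:I\in\mathcal{D},\ x,y\in I\}$ for $x,y\in\mathbb{R}^+$. Haar system. $\mathcal{H}$ consists of the functions $h_I(x)=2^{j/2}h(2^jx-k)$ for $I=I^j_k\in\mathcal{D}$, where $h=\chi_{(0,1/2]}-\chi_{(1/2,1]}$. For $h=h_I$ write $I(h)=I$. $\mathcal{H}$ is an orthonormal basis of $L^2(\mathbb{R}^+)$, and $\langle\cdot,\cdot\rangle$ is its inner product. $\mathcal{S}(\mathcal{H})$ is the set of finite linear combinations of elements of $\mathcal{H}$. Bilinear forms: $$E^\delta_s(\varphi,\psi)=\iint_{(\mathbb{R}^+)^2}\frac{[\varphi(x)-\varphi(y)][\overline{\psi}(x)-\overline{\psi}(y)]}{\delta(x,y)^{2s}}\,\frac{dx\,dy}{\delta(x,y)},$$ $$Q^\delta_s(\varphi,\psi)=\iint_{(\mathbb{R}^+)^2}\delta(x,y)^{2s}\varphi(x)\overline{\psi}(y)\,\frac{dx\,dy}{\delta(x,y)}.$$ Quadratic forms: $\mathcal{E}^\delta_s(\varphi)=E^\delta_s(\varphi,\varphi)$ and $\mathcal{Q}^\delta_s(\varphi)=Q^\delta_s(\varphi,\varphi)$. *)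

theory Defs
  imports "HOL-Analysis.Analysis"
begin

definition dyad :: "int \<Rightarrow> nat \<Rightarrow> real set" where
  "dyad j k = {real k * 2 powr (- real_of_int j) <.. (real k + 1) * 2 powr (- real_of_int j)}"

definition dlen :: "int \<Rightarrow> real" where
  "dlen j = 2 powr (- real_of_int j)"

definition ddist :: "real \<Rightarrow> real \<Rightarrow> real" where
  "ddist x y = Inf {dlen j | j k. x \<in> dyad j k \<and> y \<in> dyad j k}"

definition hmother :: "real \<Rightarrow> real" where
  "hmother t = indicator {0<..1/2} t - indicator {1/2<..1} t"

definition haar :: "int \<Rightarrow> nat \<Rightarrow> real \<Rightarrow> complex" where
  "haar j k x = complex_of_real (2 powr (real_of_int j / 2) * hmother (2 powr real_of_int j * x - real k))"

definition ipR :: "(real \<Rightarrow> complex) \<Rightarrow> (real \<Rightarrow> complex) \<Rightarrow> complex" where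
  "ipR \<phi> \<psi> = (LINT x:{0<..}|lborel. \<phi> x * cnj (\<psi> x))"

definition SH :: "(real \<Rightarrow> complex) set" where
  "SH = {\<phi>. \<exists>F c. finite F \<and> \<phi> = (\<lambda>x. \<Sum>(j,k)\<in>F. c (j,k) * haar j k x)}"

definition Eform :: "real \<Rightarrow> (real \<Rightarrow> complex) \<Rightarrow> (real \<Rightarrow> complex) \<Rightarrow> complex" where
  "Eform s \<phi> \<psi> = (LINT z:({0<..} \<times> {0<..})|lborel.
     ((\<phi> (fst z) - \<phi> (snd z)) * (cnj (\<psi> (fst z)) - cnj (\<psi> (snd z))))
       / complex_of_real (ddist (fst z) (snd z) powr (2 * s))
       / complex_of_real (ddist (fst z) (snd z)))"

definition Qform :: "real \<Rightarrow> (real \<Rightarrow> complex) \<Rightarrow> (real \<Rightarrow> complex) \<Rightarrow> complex" where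
  "Qform s \<phi> \<psi> = (LINT z:({0<..} \<times> {0<..})|lborel.
     complex_of_real (ddist (fst z) (snd z) powr (2 * s)) * \<phi> (fst z) * cnj (\<psi> (snd z))
       / complex_of_real (ddist (fst z) (snd z)))"

definition gamma1 :: "real \<Rightarrow> real" where
  "gamma1 s = (1/2) * ((2 powr (1 - 2 * s) - 1) / (1 - 2 powr (- 2 * s)))"

definition gamma2 :: "real \<Rightarrow> real" where
  "gamma2 s = (2 - 2 powr (- 2 * s)) / (1 - 2 powr (- 2 * s))"

end

theory Submission
  imports Defs
begin

definition cell :: "int \<Rightarrow> real \<Rightarrow> nat" where
  "cell j x = nat (\<lceil>2 powr real_of_int j * x\<rceil> - 1)"

lemma powr_int_pos: "0 < (2::real) powr real_of_int j" by simp

lemma mem_dyad: "x \<in> dyad j k \<longleftrightarrow> 0 < x \<and> cell j x = k"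
proof -
  let ?p = "(2::real) powr real_of_int j"
  have p: "?p > 0" by simp
  have inv: "2 powr (- real_of_int j) = 1 / ?p" by (simp add: powr_minus_divide)
  have "x \<in> dyad j k \<longleftrightarrow> real k < ?p * x \<and> ?p * x \<le> real k + 1"
    unfolding dyad_def inv using p
    by (auto simp: field_simps)
  also have "\<dots> \<longleftrightarrow> \<lceil>?p * x\<rceil> = int k + 1"
    by (simp add: ceiling_eq_iff)
  also have "\<dots> \<longleftrightarrow> 0 < x \<and> cell j x = k"
  proof
    assume a: "\<lceil>?p * x\<rceil> = int k + 1"
    then have "?p * x > 0" by (metis ceiling_le_zero not_le of_nat_0_le_iff zero_less_one add_nonneg_pos le_less_trans less_le)
    then have "x > 0" using p by (simp add: zero_less_mult_iff)
    then show "0 < x \<and> cell j x = k" using a by (simp add: cell_def)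
  next
    assume a: "0 < x \<and> cell j x = k"
    then have "?p * x > 0" using p by simp
    then have "\<lceil>?p * x\<rceil> \<ge> 1" by (simp add: one_le_ceiling)
    then show "\<lceil>?p * x\<rceil> = int k + 1" using a by (auto simp: cell_def)
  qed
  finally show ?thesis .
qed

lemma dyad_sub1: "dyad (a + 1) m \<subseteq> dyad a (m div 2)"
proof
  fix x assume x: "x \<in> dyad (a+1) m"
  define q where "q = m div 2"
  define P where "P = (2::real) powr (- real_of_int a)"
  have pos: "P > 0" by (simp add: P_def)
  have "(2::real) powr (- real_of_int (a + 1)) = 2 powr (- real_of_int a - 1)" by simp
  also have "\<dots> = P / 2" unfolding P_def by (simp only: powr_diff powr_one)
  finally have p: "(2::real) powr (- real_of_int (a + 1)) = P / 2" .
  from x have x1: "real m * (P / 2) < x" and x2: "x \<le> (real m + 1) * (P / 2)"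
    unfolding dyad_def p by auto
  have q1: "2 * q \<le> m" "m + 1 \<le> 2 * (q + 1)" unfolding q_def by presburger+
  have r1: "2 * real q \<le> real m" using q1(1) by (metis of_nat_le_iff of_nat_mult of_nat_numeral)
  have "real (m + 1) \<le> real (2 * (q + 1))" using q1(2) by (simp only: of_nat_le_iff)
  then have r2: "real m + 1 \<le> 2 * (real q + 1)" by simp
  have "real q * P = (2 * real q) * (P / 2)" by simp
  also have "\<dots> \<le> real m * (P / 2)" using r1 pos by (intro mult_right_mono) auto
  finally have a1: "real q * P < x" using x1 by linarith
  have "(real m + 1) * (P / 2) \<le> (2 * (real q + 1)) * (P / 2)" using r2 pos by (intro mult_right_mono) auto
  also have "\<dots> = (real q + 1) * P" by simp
  finally have a2: "x \<le> (real q + 1) * P" using x2 by linarith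
  show "x \<in> dyad a (m div 2)" using a1 a2 unfolding dyad_def P_def q_def by auto
qed

lemma dyad_sub_nat: "dyad (a + int d) m \<subseteq> dyad a (m div 2 ^ d)"
proof (induction d arbitrary: m)
  case 0 then show ?case by simp
next
  case (Suc d)
  have "dyad (a + int (Suc d)) m = dyad ((a + int d) + 1) m" by (simp add: algebra_simps)
  also have "\<dots> \<subseteq> dyad (a + int d) (m div 2)" by (rule dyad_sub1)
  also have "\<dots> \<subseteq> dyad a (m div 2 div 2 ^ d)" by (rule Suc.IH)
  also have "m div 2 div 2 ^ d = m div 2 ^ Suc d" by (simp add: div_mult2_eq mult.commute)
  finally show ?case .
qed

lemma dyad_sub: assumes "a \<le> b" shows "dyad b m \<subseteq> dyad a (m div 2 ^ nat (b - a))"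
proof -
  obtain d where d: "b = a + int d" using assms zle_iff_zadd by blast
  have "nat (b - a) = d" using d by simp
  then show ?thesis using dyad_sub_nat[of a d m] d by simp
qed

lemma cell_mono: "a \<le> b \<Longrightarrow> 0 < x \<Longrightarrow> cell a x = cell b x div 2 ^ nat (b - a)"
proof -
  assume ab: "a \<le> b" and x: "0 < x"
  have "x \<in> dyad b (cell b x)" using x by (simp add: mem_dyad)
  then have "x \<in> dyad a (cell b x div 2 ^ nat (b - a))" using dyad_sub[OF ab] by blast
  then show ?thesis by (simp add: mem_dyad)
qed

lemma dyad_disj: "k \<noteq> k' \<Longrightarrow> dyad j k \<inter> dyad j k' = {}"
  by (auto simp: mem_dyad)

lemma dyad_meas[measurable]: "dyad j k \<in> sets borel"
  unfolding dyad_def by simp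

lemma dyad_le: "real k * 2 powr (- real_of_int j) \<le> (real k + 1) * 2 powr (- real_of_int j)"
  by (intro mult_right_mono) auto

lemma dyad_len: "(real k + 1) * 2 powr (- real_of_int j) - real k * 2 powr (- real_of_int j) = 2 powr (- real_of_int j)"
  by (simp add: distrib_right)

lemma emeasure_dyad: "emeasure lborel (dyad j k) = ennreal (2 powr (- real_of_int j))"
  unfolding dyad_def using dyad_le[of k j] by (simp only: emeasure_lborel_Ioc dyad_len)

lemma measure_dyad: "measure lborel (dyad j k) = 2 powr (- real_of_int j)"
  unfolding measure_def emeasure_dyad by simp

lemma dyad_diam: "x \<in> dyad j k \<Longrightarrow> y \<in> dyad j k \<Longrightarrow> \<bar>x - y\<bar> < 2 powr (- real_of_int j)"
  unfolding dyad_def using dyad_len[of k j] by auto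

definition S :: "int \<Rightarrow> (real \<times> real) set" where
  "S j = {z. 0 < fst z \<and> 0 < snd z \<and> cell j (fst z) = cell j (snd z)}"

lemma S_UN: "S j = (\<Union>k. dyad j k \<times> dyad j k)"
  by (auto simp: S_def mem_dyad)

lemma S_meas[measurable]: "S j \<in> sets borel"
  unfolding S_UN by (rule sets.countable_UN) (auto intro!: borel_Times)

lemma S_anti: "a \<le> b \<Longrightarrow> S b \<subseteq> S a"
  by (auto simp: S_def cell_mono[of a b])

lemma S_low: "0 < x \<Longrightarrow> 0 < y \<Longrightarrow> \<exists>j. (x, y) \<in> S j"
proof -
  assume x: "0 < x" and y: "0 < y"
  obtain n where n: "max x y < 2 ^ n" using real_arch_pow[of "2::real" "max x y"] by auto
  have e: "(2::real) powr (- real_of_int (- int n)) = 2 ^ n" by (simp add: powr_realpow)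
  have d: "dyad (- int n) 0 = {0<..2 ^ n}" unfolding dyad_def e by simp
  have "x < 2 ^ n" "y < 2 ^ n" using le_less_trans[OF max.cobounded1 n] le_less_trans[OF max.cobounded2 n] by auto
  then have "x \<in> dyad (- int n) 0" "y \<in> dyad (- int n) 0" unfolding d using x y by auto
  then have "cell (- int n) x = 0" "cell (- int n) y = 0" by (simp_all only: mem_dyad)
  then have "(x, y) \<in> S (- int n)" using x y by (simp add: S_def)
  then show ?thesis by blast
qed

lemma S_high: "x \<noteq> y \<Longrightarrow> \<exists>j. (x, y) \<notin> S j"
proof -
  assume xy: "x \<noteq> y"
  then have "\<bar>x - y\<bar> > 0" by simp
  then obtain n where n: "(1/2::real) ^ n < \<bar>x - y\<bar>" using real_arch_pow_inv[of "\<bar>x - y\<bar>" "1/2::real"] by auto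
  have e: "(2::real) powr (- real_of_int (int n)) = (1/2) ^ n"
    by (simp add: powr_minus powr_realpow power_one_over inverse_eq_divide)
  show ?thesis
  proof (intro exI[of _ "int n"] notI)
    assume "(x, y) \<in> S (int n)"
    then have "x \<in> dyad (int n) (cell (int n) x)" "y \<in> dyad (int n) (cell (int n) x)"
      by (auto simp: S_def mem_dyad)
    from dyad_diam[OF this] n e show False by simp
  qed
qed

lemma S_level: assumes "0 < x" "0 < y" "x \<noteq> y" shows "\<exists>j. (x, y) \<in> S j \<and> (x, y) \<notin> S (j + 1)"
proof (rule ccontr)
  assume "\<not> ?thesis"
  then have stp: "\<And>j. (x, y) \<in> S j \<Longrightarrow> (x, y) \<in> S (j + 1)" by blast
  obtain j0 where j0: "(x, y) \<in> S j0" using S_low assms by blast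
  obtain j1 where j1: "(x, y) \<notin> S j1" using S_high assms by blast
  have all: "(x, y) \<in> S j" if "j \<ge> j0" for j
    using that
  proof (induction j rule: int_ge_induct)
    case base then show ?case using j0 .
  next
    case (step i) then show ?case using stp by blast
  qed
  show False
  proof (cases "j1 \<ge> j0")
    case True then show False using all j1 by blast
  next
    case False then show False using S_anti[of j1 j0] j0 j1 by auto
  qed
qed

lemma S_sym: "(x, y) \<in> S j \<longleftrightarrow> (y, x) \<in> S j"
  by (auto simp: S_def)

lemma ddist_set: "0 < x \<Longrightarrow> 0 < y \<Longrightarrow>
  {dlen j | j k. x \<in> dyad j k \<and> y \<in> dyad j k} = {2 powr (- real_of_int j) | j. (x, y) \<in> S j}"
  by (auto simp: S_def mem_dyad dlen_def)

lemma ddist_level: assumes "(x, y) \<in> S j" "(x, y) \<notin> S (j + 1)"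
  shows "ddist x y = 2 powr (- real_of_int j)"
proof -
  have x: "0 < x" "0 < y" using assms by (auto simp: S_def)
  have "i \<le> j" if "(x, y) \<in> S i" for i
  proof (rule ccontr)
    assume "\<not> i \<le> j"
    then have "S i \<subseteq> S (j+1)" by (intro S_anti) simp
    then show False using that assms by blast
  qed
  then show ?thesis unfolding ddist_def ddist_set[OF x]
    by (intro cInf_eq_minimum) (use assms in auto)
qed

lemma ddist_diag: assumes "0 < x" shows "ddist x x = 0"
proof -
  have all: "(x, x) \<in> S j" for j using assms by (simp add: S_def)
  let ?X = "{2 powr (- real_of_int j) | j::int. (x, x) \<in> S j}"
  have ne: "?X \<noteq> {}" using all by blast
  have bdd: "bdd_below ?X" by (intro bdd_belowI[of _ 0]) auto
  have ge: "0 \<le> Inf ?X" by (intro cInf_greatest ne) auto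
  have le: "Inf ?X \<le> (1/2) ^ n" for n
  proof -
    have e: "(2::real) powr (- real_of_int (int n)) = (1/2) ^ n"
      by (simp add: powr_minus powr_realpow power_one_over inverse_eq_divide)
    have "2 powr (- real_of_int (int n)) \<in> ?X" using all by blast
    then have "(1/2::real) ^ n \<in> ?X" by (simp only: e)
    then show ?thesis by (rule cInf_lower[OF _ bdd])
  qed
  have "Inf ?X \<le> 0"
  proof (rule ccontr)
    assume "\<not> Inf ?X \<le> 0"
    then obtain n where "(1/2::real) ^ n < Inf ?X" using real_arch_pow_inv[of "Inf ?X" "1/2::real"] by auto
    with le[of n] show False by simp
  qed
  with ge show ?thesis unfolding ddist_def ddist_set[OF assms assms] by simp
qed


lemma dyad_iff: "x \<in> dyad j k \<longleftrightarrow> real k < 2 powr real_of_int j * x \<and> 2 powr real_of_int j * x \<le> real k + 1"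
proof -
  define p where "p = (2::real) powr real_of_int j"
  have p: "p > 0" by (simp add: p_def)
  have inv: "2 powr (- real_of_int j) = 1 / p" by (simp add: powr_minus_divide p_def)
  have "x \<in> dyad j k \<longleftrightarrow> real k / p < x \<and> x \<le> (real k + 1) / p"
    unfolding dyad_def inv by simp
  also have "\<dots> \<longleftrightarrow> real k < x * p \<and> x * p \<le> real k + 1"
    using p by (simp only: pos_divide_less_eq pos_le_divide_eq)
  finally show ?thesis by (simp add: p_def mult.commute)
qed

lemma dyad_neg: "x \<le> 0 \<Longrightarrow> x \<notin> dyad j k"
  by (simp add: mem_dyad)

lemma dyad_top: "dyad (- N) 0 = {0<..2 powr real_of_int N}"
  unfolding dyad_def by simp

lemma powr_succ: "(2::real) powr real_of_int (j + 1) = 2 * 2 powr real_of_int j"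
proof -
  have "(2::real) powr real_of_int (j + 1) = 2 powr (real_of_int j + 1)" by simp
  also have "\<dots> = 2 powr real_of_int j * 2" by (simp only: powr_add powr_one)
  finally show ?thesis by simp
qed

lemma dyad_top_mono: assumes "N \<le> N'" shows "dyad (- N) 0 \<subseteq> dyad (- N') 0"
proof -
  have h: "(2::real) powr real_of_int N \<le> 2 powr real_of_int N'" using assms by simp
  show ?thesis unfolding dyad_top
  proof
    fix x assume "x \<in> {0<..2 powr real_of_int N}"
    then have a: "0 < x" "x \<le> 2 powr real_of_int N" by simp_all
    then have "x \<le> 2 powr real_of_int N'" using h by linarith
    then show "x \<in> {0<..2 powr real_of_int N'}" using a by simp
  qed
qed

definition hr :: "int \<Rightarrow> nat \<Rightarrow> real \<Rightarrow> real" where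
  "hr j k x = 2 powr (real_of_int j / 2) * (indicator (dyad (j+1) (2*k)) x - indicator (dyad (j+1) (2*k+1)) x)"

lemma hr_meas[measurable]: "hr j k \<in> borel_measurable borel"
  unfolding hr_def by measurable

lemma haar_eq: "haar j k x = complex_of_real (hr j k x)"
proof -
  define p where "p = (2::real) powr real_of_int j"
  have e1: "x \<in> dyad (j+1) (2*k) \<longleftrightarrow> p * x - real k \<in> {0<..1/2}"
    unfolding dyad_iff powr_succ p_def[symmetric] by auto
  have e2: "x \<in> dyad (j+1) (2*k+1) \<longleftrightarrow> p * x - real k \<in> {1/2<..1}"
    unfolding dyad_iff powr_succ p_def[symmetric] by auto
  have "hmother (p * x - real k) = indicator (dyad (j+1) (2*k)) x - indicator (dyad (j+1) (2*k+1)) x"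
    unfolding hmother_def indicator_def using e1 e2 by simp
  then show ?thesis unfolding haar_def hr_def p_def by simp
qed

lemma hr_bound: "\<bar>hr j k x\<bar> \<le> 2 powr (real_of_int j / 2)"
proof -
  have "\<bar>indicator (dyad (j+1) (2*k)) x - indicator (dyad (j+1) (2*k+1)) x\<bar> \<le> (1::real)"
    by (auto simp: indicator_def)
  then show ?thesis unfolding hr_def abs_mult by (simp add: mult_le_cancel_left1)
qed

lemma hr_supp: "hr j k x \<noteq> 0 \<Longrightarrow> x \<in> dyad j k"
proof -
  assume "hr j k x \<noteq> 0"
  then have "x \<in> dyad (j+1) (2*k) \<or> x \<in> dyad (j+1) (2*k+1)" unfolding hr_def by (auto simp: indicator_def)
  moreover have "dyad (j+1) (2*k) \<subseteq> dyad j k" using dyad_sub1[of j "2*k"] by simp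
  moreover have "dyad (j+1) (2*k+1) \<subseteq> dyad j k" using dyad_sub1[of j "2*k+1"] by simp
  ultimately show "x \<in> dyad j k" by blast
qed

lemma dyad_in_top: "\<exists>N. dyad j k \<subseteq> dyad (- N) 0 \<and> - N \<le> j"
proof -
  have le: "- (int k - j) \<le> j" by simp
  have n: "nat (j - (- (int k - j))) = k" by simp
  have "k div 2 ^ k = 0" by simp
  then have "dyad j k \<subseteq> dyad (- (int k - j)) 0" using dyad_sub[OF le, of k] n by simp
  then show ?thesis using le by blast
qed

definition supp_in :: "int \<Rightarrow> (real \<Rightarrow> real) \<Rightarrow> bool" where
  "supp_in N f \<longleftrightarrow> (\<forall>x. f x \<noteq> 0 \<longrightarrow> x \<in> dyad (- N) 0)"

lemma supp_in_mono: "supp_in N f \<Longrightarrow> N \<le> N' \<Longrightarrow> supp_in N' f"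
proof -
  assume a: "supp_in N f" "N \<le> N'"
  have "dyad (- N) 0 \<subseteq> dyad (- N') 0"
    using a(2) by (rule dyad_top_mono)
  then show ?thesis using a(1) unfolding supp_in_def by blast
qed

lemma hr_supp_in: "\<exists>N. supp_in N (hr j k) \<and> - N \<le> j"
  using dyad_in_top[of j k] hr_supp unfolding supp_in_def by blast

lemma supp_in_mult: "supp_in N f \<Longrightarrow> supp_in N (\<lambda>x. f x * g x)"
  unfolding supp_in_def by auto

lemma supp_in_mult2: "supp_in N g \<Longrightarrow> supp_in N (\<lambda>x. f x * g x)"
  unfolding supp_in_def by auto

lemma supp_in_pos: "supp_in N f \<Longrightarrow> f x \<noteq> 0 \<Longrightarrow> 0 < x"
  unfolding supp_in_def by (auto simp: mem_dyad)

lemma box_integrable: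
  fixes G :: "real \<times> real \<Rightarrow> real"
  assumes G: "G \<in> borel_measurable borel" and C: "\<And>z. \<bar>G z\<bar> \<le> C"
    and supp: "\<And>z. G z \<noteq> 0 \<Longrightarrow> z \<in> {0<..R} \<times> {0<..R}"
  shows "integrable lborel G"
proof (rule Bochner_Integration.integrable_bound)
  have bnd: "bounded ({0<..R} \<times> {0<..R})"
    by (rule bounded_subset[OF bounded_cbox[of "(0,0)" "(R,R)"]]) (auto simp: cbox_Pair_eq)
  have "integrable lborel (indicator ({0<..R} \<times> {0<..R}) :: real \<times> real \<Rightarrow> real)"
    by (intro integrable_real_indicator emeasure_bounded_finite bnd) (simp add: borel_Times)
  then show "integrable lborel (\<lambda>z. C * indicator ({0<..R} \<times> {0<..R}) z)"
    by (rule integrable_mult_right)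
  show "G \<in> borel_measurable lborel" using G by simp
  show "AE z in lborel. norm (G z) \<le> norm (C * indicator ({0<..R} \<times> {0<..R}) z)"
  proof (intro AE_I2)
    fix z
    have C0: "0 \<le> C" using C[of z] by linarith
    show "norm (G z) \<le> norm (C * indicator ({0<..R} \<times> {0<..R}) z)"
    proof (cases "G z = 0")
      case True then show ?thesis by simp
    next
      case False then have "z \<in> {0<..R} \<times> {0<..R}" by (rule supp)
      then show ?thesis using C[of z] C0 by simp
    qed
  qed
qed

lemma S_bound:
  assumes z: "(x, y) \<in> S j" and x: "x \<in> dyad (- N) 0"
  shows "y \<in> dyad (- max N (- j)) 0"
proof -
  let ?M = "max N (- j)"
  have sub: "dyad (- N) 0 \<subseteq> dyad (- ?M) 0"
    by (rule dyad_top_mono) simp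
  have xp: "0 < x" "0 < y" using z by (auto simp: S_def)
  have "x \<in> dyad (- ?M) 0" using sub x by blast
  then have "cell (- ?M) x = 0" by (simp add: mem_dyad)
  moreover have "cell (- ?M) x = cell j x div 2 ^ nat (j - (- ?M))" by (rule cell_mono) (use xp in auto)
  moreover have "cell (- ?M) y = cell j y div 2 ^ nat (j - (- ?M))" by (rule cell_mono) (use xp in auto)
  moreover have "cell j x = cell j y" using z by (simp add: S_def)
  ultimately have "cell (- ?M) y = 0" by simp
  then show ?thesis using xp by (simp add: mem_dyad)
qed

lemma S_set_integrable:
  fixes G :: "real \<times> real \<Rightarrow> real"
  assumes G: "G \<in> borel_measurable borel" and C: "\<And>z. \<bar>G z\<bar> \<le> C"
    and supp: "\<And>x y. G (x, y) \<noteq> 0 \<Longrightarrow> x \<in> dyad (- N) 0 \<or> y \<in> dyad (- N) 0"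
  shows "set_integrable lborel (S j) G"
  unfolding set_integrable_def
proof (rule box_integrable[where C = C and R = "2 powr real_of_int (max N (- j))"])
  show "(\<lambda>z. indicator (S j) z *\<^sub>R G z) \<in> borel_measurable borel" using G by measurable
  show "\<bar>indicator (S j) z *\<^sub>R G z\<bar> \<le> C" for z using C[of z] by (auto simp: indicator_def)
  fix z assume nz: "indicator (S j) z *\<^sub>R G z \<noteq> 0"
  obtain x y where zz: "z = (x, y)" by (cases z)
  have zS: "(x, y) \<in> S j" and Gnz: "G (x, y) \<noteq> 0" using nz zz by (auto simp: indicator_def split: if_splits)
  have zS': "(y, x) \<in> S j" using zS S_sym by blast
  have "x \<in> dyad (- max N (- j)) 0 \<and> y \<in> dyad (- max N (- j)) 0"
  proof (cases "x \<in> dyad (- N) 0")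
    case True
    then have "y \<in> dyad (- max N (- j)) 0" by (rule S_bound[OF zS])
    moreover have "x \<in> dyad (- max N (- j)) 0"
      using True dyad_top_mono[of N "max N (- j)"] by auto
    ultimately show ?thesis by simp
  next
    case False
    then have y: "y \<in> dyad (- N) 0" using supp[OF Gnz] by blast
    then have "x \<in> dyad (- max N (- j)) 0" by (rule S_bound[OF zS'])
    moreover have "y \<in> dyad (- max N (- j)) 0"
      using y dyad_top_mono[of N "max N (- j)"] by auto
    ultimately show ?thesis by simp
  qed
  then show "z \<in> {0<..2 powr real_of_int (max N (- j))} \<times> {0<..2 powr real_of_int (max N (- j))}"
    unfolding zz dyad_top by simp
qed


lemma dyad_inter: assumes "a \<le> b"
  shows "dyad a m \<inter> dyad b n = (if n div 2 ^ nat (b - a) = m then dyad b n else {})"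
proof (cases "n div 2 ^ nat (b - a) = m")
  case True
  then have "dyad b n \<subseteq> dyad a m" using dyad_sub[OF assms, of n] by simp
  then show ?thesis using True by auto
next
  case False
  have "x \<notin> dyad a m \<inter> dyad b n" for x
  proof
    assume x: "x \<in> dyad a m \<inter> dyad b n"
    then have "0 < x" "cell a x = m" "cell b x = n" by (auto simp: mem_dyad)
    with cell_mono[OF assms, of x] False show False by simp
  qed
  then show ?thesis using False by auto
qed

lemma dyad_inter_same: "dyad a m \<inter> dyad a n = (if n = m then dyad a n else {})"
  using dyad_inter[of a a m n] by simp

lemma fin_sub_dyad: "A \<subseteq> dyad j k \<Longrightarrow> emeasure lborel A < \<infinity>"
proof -
  assume "A \<subseteq> dyad j k"
  moreover have "dyad j k \<in> sets lborel" using dyad_meas by (simp add: sets_lborel)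
  ultimately have "emeasure lborel A \<le> emeasure lborel (dyad j k)" by (intro emeasure_mono)
  then show ?thesis unfolding emeasure_dyad by (simp add: le_less_trans)
qed

lemma int_ind_inter: "integral\<^sup>L lborel (indicator (dyad a m \<inter> dyad b n) :: real \<Rightarrow> real) = measure lborel (dyad a m \<inter> dyad b n)"
  by (simp add: integral_indicator)

lemma integrable_ind_inter: "integrable lborel (indicator (dyad a m \<inter> dyad b n) :: real \<Rightarrow> real)"
  by (intro integrable_real_indicator fin_sub_dyad[of _ a m]) auto

lemma measure_inter: assumes "a \<le> b"
  shows "measure lborel (dyad a m \<inter> dyad b n) = (if n div 2 ^ nat (b - a) = m then 2 powr (- real_of_int b) else 0)"
  unfolding dyad_inter[OF assms] by (simp add: measure_dyad)

lemma m_same: "measure lborel (dyad a m \<inter> dyad a n) = (if n = m then 2 powr (- real_of_int a) else 0)"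
  unfolding dyad_inter_same by (cases "n = m") (simp_all add: measure_dyad)

lemma hr_alt: "hr i k x = 2 powr (real_of_int i / 2) * (indicator (dyad (i+1) (2*k)) x - indicator (dyad (i+1) (2*k+1)) x)"
  by (simp add: hr_def)

lemma ind_hr: "indicator (dyad j m) x * hr i k x =
   2 powr (real_of_int i / 2) * (indicator (dyad j m \<inter> dyad (i+1) (2*k)) x - indicator (dyad j m \<inter> dyad (i+1) (2*k+1)) x)"
  unfolding hr_def indicator_inter_arith by (simp add: algebra_simps)

lemma div_pair: "(2 * k) div 2 ^ Suc d = k div 2 ^ d" "(2 * k + 1) div 2 ^ Suc d = (k::nat) div 2 ^ d"
proof -
  have "(2 * k) div (2 * 2 ^ d) = (2 * k) div 2 div 2 ^ d" by (rule div_mult2_eq)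
  then show "(2 * k) div 2 ^ Suc d = k div 2 ^ d" by simp
  have "(2 * k + 1) div (2 * 2 ^ d) = (2 * k + 1) div 2 div 2 ^ d" by (rule div_mult2_eq)
  then show "(2 * k + 1) div 2 ^ Suc d = k div 2 ^ d" by simp
qed

lemma int_ind_hr: assumes "j \<le> i" shows "LINT x|lborel. indicator (dyad j m) x * hr i k x = 0"
proof -
  have le: "j \<le> i + 1" using assms by simp
  have d: "nat (i + 1 - j) = Suc (nat (i - j))" using assms by simp
  have "LINT x|lborel. indicator (dyad j m) x * hr i k x =
     2 powr (real_of_int i / 2) * (measure lborel (dyad j m \<inter> dyad (i+1) (2*k)) - measure lborel (dyad j m \<inter> dyad (i+1) (2*k+1)))"
    unfolding ind_hr
    by (simp add: integral_mult_right_zero Bochner_Integration.integral_diff[OF integrable_ind_inter integrable_ind_inter] int_ind_inter)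
  also have "\<dots> = 0" unfolding measure_inter[OF le] d div_pair by simp
  finally show ?thesis .
qed

lemma integrable_ind_hr: "integrable lborel (\<lambda>x. indicator (dyad j m) x * hr i k x)"
  unfolding ind_hr by (intro integrable_mult_right Bochner_Integration.integrable_diff integrable_ind_inter)

lemma hr_hr_ortho_lt: assumes "i < i'"
  shows "LINT x|lborel. hr i k x * hr i' k' x = 0"
proof -
  have "hr i k x * hr i' k' x = 2 powr (real_of_int i / 2) * (indicator (dyad (i+1) (2*k)) x * hr i' k' x - indicator (dyad (i+1) (2*k+1)) x * hr i' k' x)" for x
    unfolding hr_alt[of i k] by (simp add: algebra_simps)
  then have "LINT x|lborel. hr i k x * hr i' k' x = 2 powr (real_of_int i / 2) *
     ((LINT x|lborel. indicator (dyad (i+1) (2*k)) x * hr i' k' x) - (LINT x|lborel. indicator (dyad (i+1) (2*k+1)) x * hr i' k' x))"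
    by (simp add: integral_mult_right_zero Bochner_Integration.integral_diff[OF integrable_ind_hr integrable_ind_hr])
  also have "\<dots> = 0" using assms by (simp add: int_ind_hr)
  finally show ?thesis .
qed

lemma hr_sq_expand: "hr i k x * hr i k' x = 2 powr real_of_int i *
   (indicator (dyad (i+1) (2*k) \<inter> dyad (i+1) (2*k')) x - indicator (dyad (i+1) (2*k) \<inter> dyad (i+1) (2*k'+1)) x
    - indicator (dyad (i+1) (2*k+1) \<inter> dyad (i+1) (2*k')) x + indicator (dyad (i+1) (2*k+1) \<inter> dyad (i+1) (2*k'+1)) x)"
proof -
  have c: "(2::real) powr (real_of_int i / 2) * 2 powr (real_of_int i / 2) = 2 powr real_of_int i"
    by (simp add: powr_add[symmetric])
  show ?thesis unfolding hr_alt indicator_inter_arith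
    by (simp add: algebra_simps c[symmetric])
qed

lemma hr_hr_same_level: "LINT x|lborel. hr i k x * hr i k' x = (if k = k' then 1 else 0)"
proof -
  let ?m = "\<lambda>a b. measure lborel (dyad (i+1) a \<inter> dyad (i+1) b)"
  have "LINT x|lborel. hr i k x * hr i k' x = 2 powr real_of_int i *
     (?m (2*k) (2*k') - ?m (2*k) (2*k'+1) - ?m (2*k+1) (2*k') + ?m (2*k+1) (2*k'+1))"
    unfolding hr_sq_expand
    by (simp add: integral_mult_right_zero Bochner_Integration.integral_diff Bochner_Integration.integral_add
        integrable_ind_inter Bochner_Integration.integrable_diff Bochner_Integration.integrable_add int_ind_inter)
  also have "\<dots> = (if k = k' then 1 else 0)"
  proof (cases "k = k'")
    case True
    have "2 powr real_of_int i * (2 powr (- real_of_int (i + 1)) + 2 powr (- real_of_int (i + 1))) = (1::real)"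
    proof -
      have "(2::real) powr (- real_of_int (i + 1)) = 2 powr (- real_of_int i) / 2"
      proof -
        have "(2::real) powr (- real_of_int (i + 1)) = 2 powr (- real_of_int i - 1)" by simp
        also have "\<dots> = 2 powr (- real_of_int i) / 2" by (simp only: powr_diff powr_one)
        finally show ?thesis .
      qed
      then show ?thesis by (simp add: powr_minus field_simps)
    qed
    then show ?thesis using True by (simp only: m_same) simp
  next
    case False
    then show ?thesis by (simp only: m_same) simp
  qed
  finally show ?thesis .
qed

lemma hr_ortho: "LINT x|lborel. hr i k x * hr i' k' x = (if (i, k) = (i', k') then 1 else 0)"
proof (cases i i' rule: linorder_cases)
  case less then show ?thesis by (simp add: hr_hr_ortho_lt)
next
  case equal then show ?thesis by (simp add: hr_hr_same_level)
next
  case greater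
  then have "LINT x|lborel. hr i' k' x * hr i k x = 0" by (simp add: hr_hr_ortho_lt)
  then show ?thesis using greater by (simp add: mult.commute)
qed


lemma S_meas2[measurable]: "S j \<in> sets (borel \<Otimes>\<^sub>M borel)"
  unfolding borel_prod by (rule S_meas)

lemma ind_S_level: assumes "a \<le> b" "(x, y) \<in> S b"
  shows "indicator (dyad a m) x = (indicator (dyad a m) y :: real)"
proof -
  have xp: "0 < x" "0 < y" and c: "cell b x = cell b y" using assms(2) by (auto simp: S_def)
  have "cell a x = cell a y" using cell_mono[OF assms(1) xp(1)] cell_mono[OF assms(1) xp(2)] c by simp
  then show ?thesis using xp by (simp add: indicator_def mem_dyad)
qed

lemma hr_S_level: assumes "i < j" "(x, y) \<in> S j" shows "hr i k x = hr i k y"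
proof -
  have le: "i + 1 \<le> j" using assms by simp
  show ?thesis unfolding hr_def using ind_S_level[OF le assms(2)] by simp
qed

lemma ind_S_fst: "0 < x \<Longrightarrow> indicator (S j) (x, y) = (indicator (dyad j (cell j x)) y :: real)"
  by (auto simp: indicator_def S_def mem_dyad)

lemma ind_S_snd: "0 < y \<Longrightarrow> indicator (S j) (x, y) = (indicator (dyad j (cell j y)) x :: real)"
  by (auto simp: indicator_def S_def mem_dyad)

lemma ind_S_nonpos1: "x \<le> 0 \<Longrightarrow> indicator (S j) (x, y) = (0::real)"
  by (auto simp: indicator_def S_def)

lemma ind_S_nonpos2: "y \<le> 0 \<Longrightarrow> indicator (S j) (x, y) = (0::real)"
  by (auto simp: indicator_def S_def)

lemma supp_in_dyad: "supp_in N f \<Longrightarrow> f x \<noteq> 0 \<Longrightarrow> x \<in> dyad (- N) 0"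
  unfolding supp_in_def by blast

lemma S_fst:
  fixes u :: "real \<Rightarrow> real"
  assumes u[measurable]: "u \<in> borel_measurable borel" and C: "\<And>x. \<bar>u x\<bar> \<le> C" and su: "supp_in N u"
  shows "(LINT z:S j|lborel. u (fst z)) = 2 powr (- real_of_int j) * integral\<^sup>L lborel u"
proof -
  have si: "set_integrable lborel (S j) (\<lambda>z. u (fst z))"
  proof (rule S_set_integrable[where C = C and N = N])
    show "(\<lambda>z::real\<times>real. u (fst z)) \<in> borel_measurable borel" unfolding borel_prod[symmetric] by measurable
    show "\<bar>u (fst z)\<bar> \<le> C" for z by (rule C)
    show "u (fst (x, y)) \<noteq> 0 \<Longrightarrow> x \<in> dyad (- N) 0 \<or> y \<in> dyad (- N) 0" for x y
      using supp_in_dyad[OF su, of x] by simp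
  qed
  have int: "integrable (lborel \<Otimes>\<^sub>M lborel) (\<lambda>z. indicator (S j) z * u (fst z))"
    using si unfolding set_integrable_def lborel_prod by simp
  have inner: "(LBINT y. indicator (S j) (x, y) * u x) = 2 powr (- real_of_int j) * u x" for x
  proof (cases "0 < x")
    case True
    have "(LBINT y. indicator (S j) (x, y) * u x) = (LBINT y. indicator (dyad j (cell j x)) y) * u x"
      unfolding ind_S_fst[OF True] by (rule integral_mult_left_zero)
    also have "\<dots> = 2 powr (- real_of_int j) * u x" by (simp add: measure_dyad)
    finally show ?thesis .
  next
    case False
    then have "u x = 0" using supp_in_pos[OF su] by force
    then show ?thesis by simp
  qed
  have "(LINT z:S j|lborel. u (fst z)) = integral\<^sup>L (lborel \<Otimes>\<^sub>M lborel) (\<lambda>z. indicator (S j) z * u (fst z))"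
    unfolding set_lebesgue_integral_def lborel_prod by simp
  also have "\<dots> = (LBINT x. LBINT y. indicator (S j) (x, y) * u x)"
    using lborel_pair.integral_fst'[OF int] by simp
  also have "\<dots> = (LBINT x. 2 powr (- real_of_int j) * u x)" unfolding inner ..
  also have "\<dots> = 2 powr (- real_of_int j) * integral\<^sup>L lborel u" by (rule integral_mult_right_zero)
  finally show ?thesis .
qed

lemma S_snd:
  fixes u :: "real \<Rightarrow> real"
  assumes u[measurable]: "u \<in> borel_measurable borel" and C: "\<And>x. \<bar>u x\<bar> \<le> C" and su: "supp_in N u"
  shows "(LINT z:S j|lborel. u (snd z)) = 2 powr (- real_of_int j) * integral\<^sup>L lborel u"
proof -
  have m: "(\<lambda>z. indicator (S j) z * u (fst z)) \<in> borel_measurable (lborel \<Otimes>\<^sub>M lborel)"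
    by measurable
  have sw: "(\<lambda>(x, y). indicator (S j) (y, x) * u (fst (y, x))) = (\<lambda>z. indicator (S j) z * u (snd z))"
    by (auto simp: fun_eq_iff indicator_def S_sym)
  have "(LINT z:S j|lborel. u (snd z)) = integral\<^sup>L (lborel \<Otimes>\<^sub>M lborel) (\<lambda>z. indicator (S j) z * u (snd z))"
    unfolding set_lebesgue_integral_def lborel_prod by simp
  also have "\<dots> = integral\<^sup>L (lborel \<Otimes>\<^sub>M lborel) (\<lambda>z. indicator (S j) z * u (fst z))"
    using lborel_pair.integral_product_swap[OF m] unfolding sw by simp
  also have "\<dots> = (LINT z:S j|lborel. u (fst z))"
    unfolding set_lebesgue_integral_def lborel_prod by simp
  also have "\<dots> = 2 powr (- real_of_int j) * integral\<^sup>L lborel u" by (rule S_fst[OF u C su])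
  finally show ?thesis .
qed

lemma S_prod:
  fixes f g :: "real \<Rightarrow> real"
  assumes f[measurable]: "f \<in> borel_measurable borel" and Cf: "\<And>x. \<bar>f x\<bar> \<le> Cf"
    and g[measurable]: "g \<in> borel_measurable borel" and Cg: "\<And>x. \<bar>g x\<bar> \<le> Cg" and sg: "supp_in N g"
  shows "(LINT z:S j|lborel. f (fst z) * g (snd z)) = (LBINT y. g y * (LBINT x. indicator (dyad j (cell j y)) x * f x))"
proof -
  have si: "set_integrable lborel (S j) (\<lambda>z. f (fst z) * g (snd z))"
  proof (rule S_set_integrable[where C = "Cf * Cg" and N = N])
    show "(\<lambda>z. f (fst z) * g (snd z)) \<in> borel_measurable borel" unfolding borel_prod[symmetric] by measurable
    show "\<bar>f (fst z) * g (snd z)\<bar> \<le> Cf * Cg" for z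
      unfolding abs_mult by (intro mult_mono Cf Cg) (use Cf[of "fst z"] in auto)
    show "f (fst (x, y)) * g (snd (x, y)) \<noteq> 0 \<Longrightarrow> x \<in> dyad (- N) 0 \<or> y \<in> dyad (- N) 0" for x y
      using supp_in_dyad[OF sg, of y] by auto
  qed
  have int: "integrable (lborel \<Otimes>\<^sub>M lborel) (\<lambda>(x, y). indicator (S j) (x, y) * (f x * g y))"
    using si unfolding set_integrable_def lborel_prod by (simp add: case_prod_beta')
  have inner: "(LBINT x. indicator (S j) (x, y) * (f x * g y)) = g y * (LBINT x. indicator (dyad j (cell j y)) x * f x)" for y
  proof (cases "0 < y")
    case True
    have "(LBINT x. indicator (S j) (x, y) * (f x * g y)) = (LBINT x. (indicator (dyad j (cell j y)) x * f x) * g y)"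
      unfolding ind_S_snd[OF True] by (simp add: mult.assoc)
    also have "\<dots> = (LBINT x. indicator (dyad j (cell j y)) x * f x) * g y" by (rule integral_mult_left_zero)
    finally show ?thesis by (simp add: mult.commute)
  next
    case False
    then have "g y = 0" using supp_in_pos[OF sg] by force
    then show ?thesis by simp
  qed
  have "(LINT z:S j|lborel. f (fst z) * g (snd z)) = (LINT (x, y)|(lborel \<Otimes>\<^sub>M lborel). indicator (S j) (x, y) * (f x * g y))"
    unfolding set_lebesgue_integral_def lborel_prod by (simp add: case_prod_beta')
  also have "\<dots> = (LBINT y. LBINT x. indicator (S j) (x, y) * (f x * g y))"
    using lborel_pair.integral_snd[OF int] by simp
  also have "\<dots> = (LBINT y. g y * (LBINT x. indicator (dyad j (cell j y)) x * f x))" unfolding inner ..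
  finally show ?thesis .
qed


lemma hr_bound2: "\<bar>hr i k x * hr i' k' y\<bar> \<le> 2 powr (real_of_int i / 2) * 2 powr (real_of_int i' / 2)"
  unfolding abs_mult by (intro mult_mono hr_bound) auto

lemma hr_supp_dyad: obtains N where "\<And>x. hr i k x \<noteq> 0 \<Longrightarrow> x \<in> dyad (- N) 0"
proof -
  obtain N where N: "supp_in N (hr i k)" using hr_supp_in[of i k] by blast
  show ?thesis by (rule that[of N]) (rule supp_in_dyad[OF N])
qed

lemma hr_supp_in': obtains N where "supp_in N (hr i k)"
  using hr_supp_in[of i k] by blast

lemma int_hh_fs: "set_integrable lborel (S j) (\<lambda>z. hr i k (fst z) * hr i' k' (snd z))"
proof -
  obtain N where N: "\<And>x. hr i k x \<noteq> 0 \<Longrightarrow> x \<in> dyad (- N) 0" using hr_supp_dyad[of i k] by blast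
  show ?thesis
  proof (rule S_set_integrable[where C = "2 powr (real_of_int i / 2) * 2 powr (real_of_int i' / 2)" and N = N])
    show "(\<lambda>z::real\<times>real. hr i k (fst z) * hr i' k' (snd z)) \<in> borel_measurable borel" unfolding borel_prod[symmetric] by measurable
    show "\<bar>hr i k (fst z) * hr i' k' (snd z)\<bar> \<le> 2 powr (real_of_int i / 2) * 2 powr (real_of_int i' / 2)" for z by (rule hr_bound2)
    show "hr i k (fst (x, y)) * hr i' k' (snd (x, y)) \<noteq> 0 \<Longrightarrow> x \<in> dyad (- N) 0 \<or> y \<in> dyad (- N) 0" for x y
      using N[of x] by auto
  qed
qed

lemma int_hh_ff: "set_integrable lborel (S j) (\<lambda>z. hr i k (fst z) * hr i' k' (fst z))"
proof -
  obtain N where N: "\<And>x. hr i k x \<noteq> 0 \<Longrightarrow> x \<in> dyad (- N) 0" using hr_supp_dyad[of i k] by blast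
  show ?thesis
  proof (rule S_set_integrable[where C = "2 powr (real_of_int i / 2) * 2 powr (real_of_int i' / 2)" and N = N])
    show "(\<lambda>z::real\<times>real. hr i k (fst z) * hr i' k' (fst z)) \<in> borel_measurable borel" unfolding borel_prod[symmetric] by measurable
    show "\<bar>hr i k (fst z) * hr i' k' (fst z)\<bar> \<le> 2 powr (real_of_int i / 2) * 2 powr (real_of_int i' / 2)" for z by (rule hr_bound2)
    show "hr i k (fst (x, y)) * hr i' k' (fst (x, y)) \<noteq> 0 \<Longrightarrow> x \<in> dyad (- N) 0 \<or> y \<in> dyad (- N) 0" for x y
      using N[of x] by auto
  qed
qed

lemma int_hh_ss: "set_integrable lborel (S j) (\<lambda>z. hr i k (snd z) * hr i' k' (snd z))"
proof -
  obtain N where N: "\<And>x. hr i k x \<noteq> 0 \<Longrightarrow> x \<in> dyad (- N) 0" using hr_supp_dyad[of i k] by blast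
  show ?thesis
  proof (rule S_set_integrable[where C = "2 powr (real_of_int i / 2) * 2 powr (real_of_int i' / 2)" and N = N])
    show "(\<lambda>z::real\<times>real. hr i k (snd z) * hr i' k' (snd z)) \<in> borel_measurable borel" unfolding borel_prod[symmetric] by measurable
    show "\<bar>hr i k (snd z) * hr i' k' (snd z)\<bar> \<le> 2 powr (real_of_int i / 2) * 2 powr (real_of_int i' / 2)" for z by (rule hr_bound2)
    show "hr i k (snd (x, y)) * hr i' k' (snd (x, y)) \<noteq> 0 \<Longrightarrow> x \<in> dyad (- N) 0 \<or> y \<in> dyad (- N) 0" for x y
      using N[of y] by auto
  qed
qed

lemma hh_prod_supp: "supp_in N (hr i k) \<Longrightarrow> supp_in N (\<lambda>x. hr i k x * hr i' k' x)"
  by (rule supp_in_mult)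

lemma L_diag_fst: "(LINT z:S j|lborel. hr i k (fst z) * hr i' k' (fst z)) =
    (if (i, k) = (i', k') then 2 powr (- real_of_int j) else 0)"
proof -
  obtain N where N: "supp_in N (hr i k)" using hr_supp_in[of i k] by blast
  have "(LINT z:S j|lborel. (\<lambda>x. hr i k x * hr i' k' x) (fst z)) = 2 powr (- real_of_int j) * (LBINT x. hr i k x * hr i' k' x)"
    by (rule S_fst[OF _ hr_bound2 supp_in_mult[OF N]]) measurable
  then show ?thesis by (simp add: hr_ortho)
qed

lemma L_diag_snd: "(LINT z:S j|lborel. hr i k (snd z) * hr i' k' (snd z)) =
    (if (i, k) = (i', k') then 2 powr (- real_of_int j) else 0)"
proof -
  obtain N where N: "supp_in N (hr i k)" using hr_supp_in[of i k] by blast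
  have "(LINT z:S j|lborel. (\<lambda>x. hr i k x * hr i' k' x) (snd z)) = 2 powr (- real_of_int j) * (LBINT x. hr i k x * hr i' k' x)"
    by (rule S_snd[OF _ hr_bound2 supp_in_mult[OF N]]) measurable
  then show ?thesis by (simp add: hr_ortho)
qed

lemma L_mixed: "(LINT z:S j|lborel. hr i k (fst z) * hr i' k' (snd z)) =
    (if (i, k) = (i', k') \<and> i < j then 2 powr (- real_of_int j) else 0)"
proof (cases "i < j")
  case True
  have "(LINT z:S j|lborel. hr i k (fst z) * hr i' k' (snd z)) = (LINT z:S j|lborel. hr i k (snd z) * hr i' k' (snd z))"
  proof (rule set_lebesgue_integral_cong)
    show "S j \<in> sets lborel" by simp
    show "\<forall>z. z \<in> S j \<longrightarrow> hr i k (fst z) * hr i' k' (snd z) = hr i k (snd z) * hr i' k' (snd z)"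
      using hr_S_level[OF True] by (metis prod.collapse)
  qed
  then show ?thesis using True by (simp add: L_diag_snd)
next
  case False
  obtain N where N: "supp_in N (hr i' k')" using hr_supp_in[of i' k'] by blast
  have "(LINT z:S j|lborel. hr i k (fst z) * hr i' k' (snd z)) =
      (LBINT y. hr i' k' y * (LBINT x. indicator (dyad j (cell j y)) x * hr i k x))"
    by (rule S_prod[OF hr_meas hr_bound hr_meas hr_bound N])
  also have "\<dots> = 0" using False by (simp add: int_ind_hr)
  finally show ?thesis using False by simp
qed

definition Gh :: "int \<Rightarrow> nat \<Rightarrow> int \<Rightarrow> nat \<Rightarrow> real \<times> real \<Rightarrow> real" where
  "Gh i k i' k' z = (hr i k (fst z) - hr i k (snd z)) * (hr i' k' (fst z) - hr i' k' (snd z))"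

lemma Gh_expand: "Gh i k i' k' z = hr i k (fst z) * hr i' k' (fst z) + hr i k (snd z) * hr i' k' (snd z)
   - hr i k (fst z) * hr i' k' (snd z) - hr i' k' (fst z) * hr i k (snd z)"
  unfolding Gh_def by (simp add: algebra_simps)

lemma Gh_integrable: "set_integrable lborel (S j) (Gh i k i' k')"
  unfolding Gh_expand[abs_def]
  by (intro set_integral_add set_integral_diff int_hh_ff int_hh_ss int_hh_fs)

lemma L_Gh: "(LINT z:S j|lborel. Gh i k i' k' z) = (if (i, k) = (i', k') \<and> j \<le> i then 2 * 2 powr (- real_of_int j) else 0)"
proof -
  have "(LINT z:S j|lborel. Gh i k i' k' z) =
     (LINT z:S j|lborel. hr i k (fst z) * hr i' k' (fst z)) + (LINT z:S j|lborel. hr i k (snd z) * hr i' k' (snd z))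
     - (LINT z:S j|lborel. hr i k (fst z) * hr i' k' (snd z)) - (LINT z:S j|lborel. hr i' k' (fst z) * hr i k (snd z))"
    unfolding Gh_expand
    by (simp add: set_integral_add set_integral_diff int_hh_ff int_hh_ss int_hh_fs)
  also have "\<dots> = (if (i, k) = (i', k') \<and> j \<le> i then 2 * 2 powr (- real_of_int j) else 0)"
    unfolding L_diag_fst L_diag_snd L_mixed by auto
  finally show ?thesis .
qed

definition Pj :: "int \<Rightarrow> real \<times> real \<Rightarrow> real" where
  "Pj N z = indicator (dyad (- N) 0) (fst z) * indicator (dyad (- N) 0) (snd z)"

lemma supp_in_ind: "supp_in N (indicator (dyad (- N) 0))"
  unfolding supp_in_def by (auto simp: indicator_def)

lemma Pj_integrable: "set_integrable lborel (S j) (Pj N)"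
proof (rule S_set_integrable[where C = 1 and N = N])
  show "Pj N \<in> borel_measurable borel" unfolding Pj_def borel_prod[symmetric] by measurable
  show "\<bar>Pj N z\<bar> \<le> 1" for z unfolding Pj_def by (auto simp: indicator_def)
  show "Pj N (x, y) \<noteq> 0 \<Longrightarrow> x \<in> dyad (- N) 0 \<or> y \<in> dyad (- N) 0" for x y
    unfolding Pj_def by (auto simp: indicator_def split: if_splits)
qed

lemma L_Pj: "(LINT z:S j|lborel. Pj N z) =
   (if - N \<le> j then 2 powr (- real_of_int j) * 2 powr real_of_int N else 2 powr real_of_int N * 2 powr real_of_int N)"
proof (cases "- N \<le> j")
  case True
  have "(LINT z:S j|lborel. Pj N z) = (LINT z:S j|lborel. (\<lambda>x. indicator (dyad (- N) 0) x * indicator (dyad (- N) 0) x) (snd z))"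
  proof (rule set_lebesgue_integral_cong)
    show "S j \<in> sets lborel" by simp
    show "\<forall>z. z \<in> S j \<longrightarrow> Pj N z = (\<lambda>x. indicator (dyad (- N) 0) x * indicator (dyad (- N) 0) x) (snd z)"
      unfolding Pj_def using ind_S_level[OF True] by (metis prod.collapse)
  qed
  also have "\<dots> = 2 powr (- real_of_int j) * (LBINT x. indicator (dyad (- N) 0) x * indicator (dyad (- N) 0) x)"
  proof (rule S_snd[where C = 1 and N = N])
    show "(\<lambda>x. indicator (dyad (- N) 0) x * indicator (dyad (- N) 0) x :: real) \<in> borel_measurable borel" by measurable
    show "\<bar>indicator (dyad (- N) 0) x * indicator (dyad (- N) 0) x :: real\<bar> \<le> 1" for x by (auto simp: indicator_def)
    show "supp_in N (\<lambda>x. indicator (dyad (- N) 0) x * indicator (dyad (- N) 0) x :: real)"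
      by (rule supp_in_mult[OF supp_in_ind])
  qed
  also have "(LBINT x. indicator (dyad (- N) 0) x * indicator (dyad (- N) 0) x) = 2 powr real_of_int N"
    unfolding indicator_inter_arith[symmetric] int_ind_inter by (simp add: measure_dyad)
  finally show ?thesis using True by simp
next
  case False
  then have le: "j \<le> - N" by simp
  have inner: "indicator (dyad (- N) 0) y * (LBINT x. indicator (dyad j (cell j y)) x * indicator (dyad (- N) 0) x) =
     indicator (dyad (- N) 0) y * 2 powr real_of_int N" for y :: real
  proof (cases "y \<in> dyad (- N) 0")
    case True
    have "dyad (- N) 0 \<subseteq> dyad j 0" using dyad_sub[OF le, of 0] by simp
    then have "y \<in> dyad j 0" using True by blast
    then have c: "cell j y = 0" by (simp add: mem_dyad)
    have "(LBINT x. indicator (dyad j (cell j y)) x * indicator (dyad (- N) 0) x) = 2 powr real_of_int N"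
      unfolding c indicator_inter_arith[symmetric] int_ind_inter measure_inter[OF le] by simp
    then show ?thesis by simp
  next
    case False then show ?thesis by simp
  qed
  have "(LINT z:S j|lborel. Pj N z) =
      (LBINT y. indicator (dyad (- N) 0) y * (LBINT x. indicator (dyad j (cell j y)) x * indicator (dyad (- N) 0) x))"
    unfolding Pj_def
  proof (rule S_prod[where Cf = 1 and Cg = 1 and N = N])
    show "(indicator (dyad (- N) 0) :: real \<Rightarrow> real) \<in> borel_measurable borel" by measurable
    show "(indicator (dyad (- N) 0) :: real \<Rightarrow> real) \<in> borel_measurable borel" by measurable
    show "\<bar>indicator (dyad (- N) 0) x :: real\<bar> \<le> 1" for x by (auto simp: indicator_def)
    show "\<bar>indicator (dyad (- N) 0) x :: real\<bar> \<le> 1" for x by (auto simp: indicator_def)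
    show "supp_in N (indicator (dyad (- N) 0))" by (rule supp_in_ind)
  qed
  also have "\<dots> = (LBINT y. indicator (dyad (- N) 0) y * 2 powr real_of_int N)" unfolding inner ..
  also have "\<dots> = 2 powr real_of_int N * 2 powr real_of_int N"
    by (simp add: integral_mult_left_zero measure_dyad)
  finally show ?thesis using False by simp
qed


definition D :: "int \<Rightarrow> (real \<times> real) set" where "D j = S j - S (j + 1)"
definition A :: "nat \<Rightarrow> (real \<times> real) set" where "A n = S (- int n) - S (int n + 1)"
definition R0 :: "(real \<times> real) set" where "R0 = {z. 0 < fst z \<and> 0 < snd z \<and> fst z \<noteq> snd z}"
definition dd :: "real \<times> real \<Rightarrow> real" where "dd z = ddist (fst z) (snd z)"

lemma D_meas[measurable]: "D j \<in> sets borel" unfolding D_def by measurable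
lemma A_meas[measurable]: "A n \<in> sets borel" unfolding A_def by measurable
lemma R0_meas[measurable]: "R0 \<in> sets borel"
proof -
  have e: "R0 = {z. 0 < fst z} \<inter> {z. 0 < snd z} \<inter> (UNIV - {z. fst z = snd z})" unfolding R0_def by auto
  have "{z::real\<times>real. 0 < fst z} \<in> sets borel" by (intro borel_open open_Collect_less) (auto intro: continuous_intros)
  moreover have "{z::real\<times>real. 0 < snd z} \<in> sets borel" by (intro borel_open open_Collect_less) (auto intro: continuous_intros)
  moreover have "{z::real\<times>real. fst z = snd z} \<in> sets borel" by (intro borel_closed closed_Collect_eq) (auto intro: continuous_intros)
  moreover have "(UNIV :: (real \<times> real) set) \<in> sets borel" by simp
  ultimately show ?thesis unfolding e by (intro sets.Int sets.Diff) simp_all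
qed

lemma D_dd: "z \<in> D j \<Longrightarrow> dd z = 2 powr (- real_of_int j)"
  unfolding D_def dd_def using ddist_level[of "fst z" "snd z" j] by auto

lemma S_diag: "z \<in> S j \<Longrightarrow> fst z = snd z \<Longrightarrow> z \<in> S j'"
  by (auto simp: S_def)

lemma D_disj: assumes "j \<noteq> j'" shows "D j \<inter> D j' = {}"
proof -
  have "D a \<inter> D b = {}" if "a < b" for a b
  proof -
    have "S b \<subseteq> S (a + 1)" using that by (intro S_anti) simp
    then show ?thesis unfolding D_def by auto
  qed
  from this[of j j'] this[of j' j] assms show ?thesis by (cases "j < j'") auto
qed

lemma D_sub_R0: "D j \<subseteq> R0"
  unfolding D_def R0_def using S_diag by (auto simp: S_def)

lemma A_eq: "A n = (\<Union>j\<in>{- int n..int n}. D j)"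
proof
  show "A n \<subseteq> (\<Union>j\<in>{- int n..int n}. D j)"
  proof
    fix z assume z: "z \<in> A n"
    then have zS: "z \<in> S (- int n)" and zn: "z \<notin> S (int n + 1)" by (auto simp: A_def)
    have pos: "0 < fst z" "0 < snd z" using zS by (auto simp: S_def)
    have ne: "fst z \<noteq> snd z" using S_diag[OF zS] zn by blast
    obtain j where j: "(fst z, snd z) \<in> S j" "(fst z, snd z) \<notin> S (j + 1)" using S_level[OF pos ne] by blast
    have "- int n \<le> j"
    proof (rule ccontr)
      assume "\<not> - int n \<le> j"
      then have "S (- int n) \<subseteq> S (j + 1)" by (intro S_anti) simp
      then show False using zS j by auto
    qed
    moreover have "j \<le> int n"
    proof (rule ccontr)
      assume "\<not> j \<le> int n"
      then have "S j \<subseteq> S (int n + 1)" by (intro S_anti) simp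
      then show False using zn j by auto
    qed
    ultimately show "z \<in> (\<Union>j\<in>{- int n..int n}. D j)" using j by (auto simp: D_def)
  qed
next
  show "(\<Union>j\<in>{- int n..int n}. D j) \<subseteq> A n"
  proof
    fix z assume "z \<in> (\<Union>j\<in>{- int n..int n}. D j)"
    then obtain j where j: "- int n \<le> j" "j \<le> int n" "z \<in> S j" "z \<notin> S (j + 1)" by (auto simp: D_def)
    have "S j \<subseteq> S (- int n)" using j by (intro S_anti) simp
    moreover have "S (int n + 1) \<subseteq> S (j + 1)" using j by (intro S_anti) simp
    ultimately show "z \<in> A n" using j by (auto simp: A_def)
  qed
qed

lemma A_sub_R0: "A n \<subseteq> R0" unfolding A_eq using D_sub_R0 by blast

lemma A_mono: "incseq A"
proof (rule incseq_SucI)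
  fix n show "A n \<subseteq> A (Suc n)" unfolding A_eq by (intro UN_mono) auto
qed

lemma A_UN: "(\<Union>n. A n) = R0"
proof
  show "(\<Union>n. A n) \<subseteq> R0" using A_sub_R0 by blast
  show "R0 \<subseteq> (\<Union>n. A n)"
  proof
    fix z assume "z \<in> R0"
    then have pos: "0 < fst z" "0 < snd z" and ne: "fst z \<noteq> snd z" by (auto simp: R0_def)
    obtain j where j: "(fst z, snd z) \<in> S j" "(fst z, snd z) \<notin> S (j + 1)" using S_level[OF pos ne] by blast
    have "z \<in> D j" using j by (simp add: D_def)
    moreover have "j \<in> {- int (nat \<bar>j\<bar>)..int (nat \<bar>j\<bar>)}" by auto
    ultimately have "z \<in> A (nat \<bar>j\<bar>)" unfolding A_eq by blast
    then show "z \<in> (\<Union>n. A n)" by blast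
  qed
qed

lemma S_split: "S j = D j \<union> S (j + 1)" "D j \<inter> S (j + 1) = {}"
  unfolding D_def using S_anti[of j "j+1"] by auto

lemma level_finite:
  fixes G :: "real \<times> real \<Rightarrow> real" and \<Phi> :: "real \<Rightarrow> real"
  assumes Gi: "\<And>j. set_integrable lborel (S j) G"
  shows "set_integrable lborel (A n) (\<lambda>z. G z * \<Phi> (dd z))"
    and "(LINT z:A n|lborel. G z * \<Phi> (dd z)) =
      (\<Sum>j\<in>{- int n..int n}. \<Phi> (2 powr (- real_of_int j)) * ((LINT z:S j|lborel. G z) - (LINT z:S (j + 1)|lborel. G z)))"
proof -
  have GD: "set_integrable lborel (D j) G" for j
    by (rule set_integrable_subset[OF Gi[of j]]) (auto simp: D_def)
  have cong: "set_integrable lborel (D j) (\<lambda>z. G z * \<Phi> (dd z)) = set_integrable lborel (D j) (\<lambda>z. G z * \<Phi> (2 powr (- real_of_int j)))" for j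
    by (rule set_integrable_cong) (auto simp: D_dd)
  have DI: "set_integrable lborel (D j) (\<lambda>z. G z * \<Phi> (dd z))" for j
    unfolding cong by (rule set_integrable_mult_left) (rule GD)
  have DV: "(LINT z:D j|lborel. G z * \<Phi> (dd z)) = \<Phi> (2 powr (- real_of_int j)) * ((LINT z:S j|lborel. G z) - (LINT z:S (j + 1)|lborel. G z))" for j
  proof -
    have "(LINT z:D j|lborel. G z * \<Phi> (dd z)) = (LINT z:D j|lborel. G z * \<Phi> (2 powr (- real_of_int j)))"
      by (rule set_lebesgue_integral_cong) (auto simp: D_dd)
    also have "\<dots> = (LINT z:D j|lborel. G z) * \<Phi> (2 powr (- real_of_int j))" by (rule set_integral_mult_left)
    also have "(LINT z:S j|lborel. G z) = (LINT z:D j|lborel. G z) + (LINT z:S (j + 1)|lborel. G z)"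
      unfolding S_split(1)[of j] by (rule set_integral_Un[OF S_split(2) GD Gi])
    ultimately show ?thesis by (simp add: algebra_simps)
  qed
  have disj: "disjoint_family_on D {- int n..int n}"
    unfolding disjoint_family_on_def using D_disj by blast
  show "set_integrable lborel (A n) (\<lambda>z. G z * \<Phi> (dd z))"
    unfolding A_eq by (rule set_integrable_UN) (use DI disj in auto)
  show "(LINT z:A n|lborel. G z * \<Phi> (dd z)) =
      (\<Sum>j\<in>{- int n..int n}. \<Phi> (2 powr (- real_of_int j)) * ((LINT z:S j|lborel. G z) - (LINT z:S (j + 1)|lborel. G z)))"
    unfolding A_eq by (subst set_integral_finite_Union) (use DI disj DV in auto)
qed

lemma A_sum_eq:
  fixes H :: "real \<times> real \<Rightarrow> real" and c :: "int \<Rightarrow> real \<times> real \<Rightarrow> real"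
  assumes Hc: "\<And>j z. z \<in> D j \<Longrightarrow> H z = c j z"
  shows "indicator (A n) z * H z = (\<Sum>j\<in>{- int n..int n}. indicator (D j) z * c j z)"
proof (cases "z \<in> A n")
  case True
  then obtain j0 where j0: "j0 \<in> {- int n..int n}" "z \<in> D j0" unfolding A_eq by blast
  have "(\<Sum>j\<in>{- int n..int n}. indicator (D j) z * c j z) =
      indicator (D j0) z * c j0 z + (\<Sum>j\<in>{- int n..int n} - {j0}. indicator (D j) z * c j z)"
    by (rule sum.remove) (use j0 in auto)
  also have "(\<Sum>j\<in>{- int n..int n} - {j0}. indicator (D j) z * c j z) = 0"
  proof (rule sum.neutral, intro ballI)
    fix j assume "j \<in> {- int n..int n} - {j0}"
    then have "j \<noteq> j0" by auto
    then have "z \<notin> D j" using D_disj[of j j0] j0 by auto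
    then show "indicator (D j) z * c j z = 0" by simp
  qed
  finally show ?thesis using True j0 Hc by simp
next
  case False
  then have "z \<notin> D j" if "j \<in> {- int n..int n}" for j using that unfolding A_eq by blast
  then show ?thesis using False by (simp add: sum.neutral)
qed

lemma meas_R0:
  fixes G :: "real \<times> real \<Rightarrow> real" and \<Phi> :: "real \<Rightarrow> real"
  assumes G[measurable]: "G \<in> borel_measurable borel"
  shows "(\<lambda>z. indicator R0 z * (G z * \<Phi> (dd z))) \<in> borel_measurable borel"
proof (rule borel_measurable_LIMSEQ_real[where u = "\<lambda>n z. indicator (A n) z * (G z * \<Phi> (dd z))"])
  fix z :: "real \<times> real"
  show "(\<lambda>n. indicator (A n) z * (G z * \<Phi> (dd z))) \<longlonglongrightarrow> indicator R0 z * (G z * \<Phi> (dd z))"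
  proof (cases "z \<in> R0")
    case True
    then obtain n0 where n0: "z \<in> A n0" using A_UN by blast
    have "eventually (\<lambda>n. z \<in> A n) sequentially"
      using n0 A_mono unfolding eventually_sequentially incseq_def by blast
    then have "eventually (\<lambda>n. indicator (A n) z * (G z * \<Phi> (dd z)) = indicator R0 z * (G z * \<Phi> (dd z))) sequentially"
      by eventually_elim (use True in simp)
    then show ?thesis by (rule tendsto_eventually)
  next
    case False
    then have "z \<notin> A n" for n using A_sub_R0 by blast
    then show ?thesis using False by simp
  qed
next
  fix n
  have "(\<lambda>z. indicator (A n) z * (G z * \<Phi> (dd z))) = (\<lambda>z. \<Sum>j\<in>{- int n..int n}. indicator (D j) z * (G z * \<Phi> (2 powr (- real_of_int j))))"
    by (rule ext, rule A_sum_eq) (simp add: D_dd)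
  also have "\<dots> \<in> borel_measurable borel" by measurable
  finally show "(\<lambda>z. indicator (A n) z * (G z * \<Phi> (dd z))) \<in> borel_measurable borel" .
qed

lemma R0_D: "z \<in> R0 \<Longrightarrow> \<exists>j. z \<in> D j"
  using A_UN unfolding A_eq by blast

lemma pos_R0:
  fixes P :: "real \<times> real \<Rightarrow> real" and \<Phi> :: "real \<Rightarrow> real"
  assumes Pnn: "\<And>z. 0 \<le> P z" and \<Phi>nn: "\<And>j. 0 \<le> \<Phi> (2 powr (- real_of_int j))"
    and Pi: "\<And>j. set_integrable lborel (S j) P"
    and lim: "(\<lambda>n. \<Sum>j\<in>{- int n..int n}. \<Phi> (2 powr (- real_of_int j)) * ((LINT z:S j|lborel. P z) - (LINT z:S (j + 1)|lborel. P z))) \<longlonglongrightarrow> l"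
  shows "set_integrable lborel R0 (\<lambda>z. P z * \<Phi> (dd z))"
proof -
  have "set_integrable lborel (\<Union>n. A n) (\<lambda>z. P z * \<Phi> (dd z))"
  proof (rule pos_integrable_to_top[where l = l])
    show "A n \<in> sets lborel" for n by simp
    show "mono A" using A_mono by (simp add: incseq_def mono_def)
    show "0 \<le> P z * \<Phi> (dd z)" if zA: "z \<in> A n" for z n
    proof -
      have "z \<in> R0" using zA A_sub_R0 by blast
      then obtain j where "z \<in> D j" using R0_D by blast
      then show ?thesis using Pnn \<Phi>nn by (simp add: D_dd)
    qed
    show "set_integrable lborel (A n) (\<lambda>z. P z * \<Phi> (dd z))" for n by (rule level_finite(1)[OF Pi])
    show "(\<lambda>n. LINT z:A n|lborel. P z * \<Phi> (dd z)) \<longlonglongrightarrow> l"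
      unfolding level_finite(2)[OF Pi] by (rule lim)
  qed
  then show ?thesis unfolding A_UN .
qed

lemma integrable_R0:
  fixes G P :: "real \<times> real \<Rightarrow> real" and \<Phi> :: "real \<Rightarrow> real"
  assumes G: "G \<in> borel_measurable borel" and GP: "\<And>z. \<bar>G z\<bar> \<le> P z"
    and \<Phi>nn: "\<And>j. 0 \<le> \<Phi> (2 powr (- real_of_int j))"
    and Pi: "set_integrable lborel R0 (\<lambda>z. P z * \<Phi> (dd z))"
  shows "set_integrable lborel R0 (\<lambda>z. G z * \<Phi> (dd z))"
proof (rule set_integrable_bound[OF Pi])
  show "set_borel_measurable lborel R0 (\<lambda>z. G z * \<Phi> (dd z))"
    unfolding set_borel_measurable_def using meas_R0[OF G, of \<Phi>] by simp
  show "AE z\<in>R0 in lborel. norm (G z * \<Phi> (dd z)) \<le> norm (P z * \<Phi> (dd z))"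
  proof (rule AE_I2, rule impI)
    fix z assume "z \<in> R0"
    then obtain j where "z \<in> D j" using R0_D by blast
    then have e: "dd z = 2 powr (- real_of_int j)" by (rule D_dd)
    have "\<bar>G z\<bar> * \<Phi> (dd z) \<le> P z * \<Phi> (dd z)" unfolding e by (intro mult_right_mono GP \<Phi>nn)
    then show "norm (G z * \<Phi> (dd z)) \<le> norm (P z * \<Phi> (dd z))"
      unfolding e using \<Phi>nn[of j] GP[of z] by (simp add: abs_mult)
  qed
qed

lemma level_limit:
  fixes G :: "real \<times> real \<Rightarrow> real" and \<Phi> :: "real \<Rightarrow> real"
  assumes Gi: "\<And>j. set_integrable lborel (S j) G"
    and I: "set_integrable lborel R0 (\<lambda>z. G z * \<Phi> (dd z))"
  shows "(\<lambda>n. \<Sum>j\<in>{- int n..int n}. \<Phi> (2 powr (- real_of_int j)) * ((LINT z:S j|lborel. G z) - (LINT z:S (j + 1)|lborel. G z)))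
     \<longlonglongrightarrow> (LINT z:R0|lborel. G z * \<Phi> (dd z))"
proof -
  have "(\<lambda>n. LINT z:A n|lborel. G z * \<Phi> (dd z)) \<longlonglongrightarrow> (LINT z:(\<Union>n. A n)|lborel. G z * \<Phi> (dd z))"
    by (rule set_integral_cont_up) (use A_mono I A_UN in auto)
  then show ?thesis unfolding level_finite(2)[OF Gi] A_UN .
qed


lemma two_sided_right:
  fixes t :: "int \<Rightarrow> real" and f :: "nat \<Rightarrow> real"
  assumes z: "\<And>j. Jc < j \<Longrightarrow> t j = 0" and f: "\<And>m. t (Jc - int m) = f m" and s: "f sums l"
  shows "(\<lambda>n. \<Sum>j\<in>{- int n..int n}. t j) \<longlonglongrightarrow> l"
proof -
  define g where "g n = nat (int n + Jc) + 1" for n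
  have ev: "eventually (\<lambda>n. (\<Sum>m<g n. f m) = (\<Sum>j\<in>{- int n..int n}. t j)) sequentially"
  proof (rule eventually_sequentiallyI[of "nat \<bar>Jc\<bar>"])
    fix n assume n: "nat \<bar>Jc\<bar> \<le> n"
    then have Jcn: "Jc \<le> int n" "- int n \<le> Jc" by auto
    have "(\<Sum>j\<in>{- int n..int n}. t j) = (\<Sum>j\<in>{- int n..Jc}. t j)"
      by (rule sum.mono_neutral_right) (use Jcn z in auto)
    also have "\<dots> = (\<Sum>m<g n. t (Jc - int m))"
    proof (rule sum.reindex_bij_witness[where i = "\<lambda>m. Jc - int m" and j = "\<lambda>x. nat (Jc - x)"])
      fix a assume a: "a \<in> {- int n..Jc}"
      show "Jc - int (nat (Jc - a)) = a" using a by simp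
      show "nat (Jc - a) \<in> {..<g n}" using a Jcn unfolding g_def by auto
      show "t (Jc - int (nat (Jc - a))) = t a" using a by simp
    next
      fix b assume b: "b \<in> {..<g n}"
      show "nat (Jc - (Jc - int b)) = b" by simp
      show "Jc - int b \<in> {- int n..Jc}" using b Jcn unfolding g_def by auto
    qed
    also have "\<dots> = (\<Sum>m<g n. f m)" by (simp add: f)
    finally show "(\<Sum>m<g n. f m) = (\<Sum>j\<in>{- int n..int n}. t j)" by simp
  qed
  have lim: "(\<lambda>K. \<Sum>m<K. f m) \<longlonglongrightarrow> l" using s by (simp add: sums_def)
  have gl: "filterlim g at_top sequentially"
    unfolding filterlim_at_top
  proof (intro allI eventually_sequentiallyI)
    fix Z :: nat and n assume "Z + nat \<bar>Jc\<bar> \<le> n"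
    then show "Z \<le> g n" unfolding g_def by auto
  qed
  have "(\<lambda>n. \<Sum>m<g n. f m) \<longlonglongrightarrow> l" by (rule filterlim_compose[OF lim gl])
  then show ?thesis by (rule Lim_transform_eventually[OF _ ev])
qed

lemma sym_sum_neg: "(\<Sum>j\<in>{- int n..int n}. t (- j)) = (\<Sum>j\<in>{- int n..int n}. (t j :: real))"
  by (rule sum.reindex_bij_witness[where i = uminus and j = uminus]) auto

lemma two_sided_left:
  fixes t :: "int \<Rightarrow> real" and f :: "nat \<Rightarrow> real"
  assumes z: "\<And>j. j < Jc \<Longrightarrow> t j = 0" and f: "\<And>m. t (Jc + int m) = f m" and s: "f sums l"
  shows "(\<lambda>n. \<Sum>j\<in>{- int n..int n}. t j) \<longlonglongrightarrow> l"
proof -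
  have "(\<lambda>n. \<Sum>j\<in>{- int n..int n}. t (- j)) \<longlonglongrightarrow> l"
    by (rule two_sided_right[where Jc = "- Jc" and f = f]) (use z f s in \<open>auto simp: add.commute\<close>)
  then show ?thesis unfolding sym_sum_neg .
qed

definition PhiE :: "real \<Rightarrow> real \<Rightarrow> real" where "PhiE s t = 1 / t powr (2 * s) / t"
definition PhiQ :: "real \<Rightarrow> real \<Rightarrow> real" where "PhiQ s t = t powr (2 * s) / t"

lemma p2_inv: "1 / (2::real) powr a = 2 powr (- a)" by (simp add: powr_minus_divide)
lemma p2_div: "(2::real) powr a / 2 powr b = 2 powr (a - b)" by (simp add: powr_diff)
lemma p2_mult: "(2::real) powr a * 2 powr b = 2 powr (a + b)" by (simp add: powr_add)

lemma PhiE_val: "PhiE s (2 powr (- real_of_int j)) = 2 powr (real_of_int j * (2 * s + 1))"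
proof -
  have "PhiE s (2 powr (- real_of_int j)) = 1 / 2 powr (- real_of_int j * (2 * s)) / 2 powr (- real_of_int j)"
    unfolding PhiE_def powr_powr ..
  also have "\<dots> = 2 powr (- (- real_of_int j * (2 * s)) - (- real_of_int j))" unfolding p2_inv p2_div ..
  also have "- (- real_of_int j * (2 * s)) - (- real_of_int j) = real_of_int j * (2 * s + 1)" by (simp add: algebra_simps)
  finally show ?thesis .
qed

lemma PhiQ_val: "PhiQ s (2 powr (- real_of_int j)) = 2 powr (real_of_int j * (1 - 2 * s))"
proof -
  have "PhiQ s (2 powr (- real_of_int j)) = 2 powr (- real_of_int j * (2 * s)) / 2 powr (- real_of_int j)"
    unfolding PhiQ_def powr_powr ..
  also have "\<dots> = 2 powr (- real_of_int j * (2 * s) - (- real_of_int j))" unfolding p2_div ..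
  also have "- real_of_int j * (2 * s) - (- real_of_int j) = real_of_int j * (1 - 2 * s)" by (simp add: algebra_simps)
  finally show ?thesis .
qed

lemma p2_succ: "(2::real) powr (- real_of_int (j + 1)) = 2 powr (- real_of_int j) / 2"
proof -
  have "(2::real) powr (- real_of_int (j + 1)) = 2 powr (- real_of_int j - 1)" by simp
  also have "\<dots> = 2 powr (- real_of_int j) / 2" by (simp only: powr_diff powr_one)
  finally show ?thesis .
qed

lemma q_pow: "((2::real) powr (- 2 * s)) ^ m = 2 powr (- 2 * s * real m)"
  by (simp add: powr_power mult.commute)

lemma q_lt1: assumes "0 < s" shows "(2::real) powr (- 2 * s) < 1"
proof -
  have "(2::real) powr (- 2 * s) < 2 powr 0" by (rule powr_less_mono) (use assms in auto)
  then show ?thesis by simp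
qed

lemma q_pos: "0 < (2::real) powr (- 2 * s)" by simp

lemma aux_g2: "(q::real) < 1 \<Longrightarrow> 1 / (1 - q) + 1 = (2 - q) / (1 - q)"
  by (simp add: field_simps)

lemma aux_g1: "(q::real) < 1 \<Longrightarrow> c / 2 * (1 / (1 - q) - 2) = c * (1 / 2 * ((2 * q - 1) / (1 - q)))"
  by (simp add: field_simps)

definition LE :: "int \<Rightarrow> int \<Rightarrow> real" where "LE i j = (if j \<le> i then 2 * 2 powr (- real_of_int j) else 0)"
definition tE :: "real \<Rightarrow> int \<Rightarrow> int \<Rightarrow> real" where
  "tE s i j = PhiE s (2 powr (- real_of_int j)) * (LE i j - LE i (j + 1))"

lemma tE_zero: "i < j \<Longrightarrow> tE s i j = 0"
  unfolding tE_def LE_def by simp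

lemma tE_val: "tE s i (i - int m) = 2 powr (2 * s * real_of_int i) * ((2 powr (- 2 * s)) ^ m + (if m = 0 then 1 else 0))"
proof (cases "m = 0")
  case True
  have "tE s i i = 2 powr (real_of_int i * (2 * s + 1)) * (2 * 2 powr (- real_of_int i))"
    unfolding tE_def LE_def PhiE_val by simp
  also have "\<dots> = 2 * (2 powr (real_of_int i * (2 * s + 1)) * 2 powr (- real_of_int i))" by simp
  also have "2 powr (real_of_int i * (2 * s + 1)) * 2 powr (- real_of_int i) = (2::real) powr (2 * s * real_of_int i)"
    unfolding p2_mult by (simp add: algebra_simps)
  finally show ?thesis using True by simp
next
  case False
  let ?j = "i - int m"
  have le: "?j \<le> i" "?j + 1 \<le> i" using False by auto
  have "LE i ?j - LE i (?j + 1) = 2 * 2 powr (- real_of_int ?j) - 2 * (2 powr (- real_of_int ?j) / 2)"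
    unfolding LE_def by (simp only: if_P[OF le(1)] if_P[OF le(2)] p2_succ)
  also have "\<dots> = 2 powr (- real_of_int ?j)" by simp
  finally have "LE i ?j - LE i (?j + 1) = 2 powr (- real_of_int ?j)" .
  then have "tE s i ?j = 2 powr (real_of_int ?j * (2 * s + 1)) * 2 powr (- real_of_int ?j)"
    unfolding tE_def PhiE_val by simp
  also have "\<dots> = 2 powr (2 * s * real_of_int i + (- 2 * s * real m))"
    unfolding p2_mult by (simp add: algebra_simps)
  also have "\<dots> = 2 powr (2 * s * real_of_int i) * (2 powr (- 2 * s)) ^ m"
    unfolding q_pow p2_mult ..
  finally show ?thesis using False by simp
qed

lemma E_series: assumes "0 < s"
  shows "(\<lambda>n. \<Sum>j\<in>{- int n..int n}. tE s i j) \<longlonglongrightarrow> 2 powr (2 * s * real_of_int i) * gamma2 s"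
proof (rule two_sided_right[where t = "tE s i" and Jc = i and f = "\<lambda>m. 2 powr (2 * s * real_of_int i) * ((2 powr (- 2 * s)) ^ m + (if m = 0 then 1 else 0))"])
  show "\<And>j. i < j \<Longrightarrow> tE s i j = 0" by (rule tE_zero)
  show "\<And>m. tE s i (i - int m) = 2 powr (2 * s * real_of_int i) * ((2 powr (- 2 * s)) ^ m + (if m = 0 then 1 else 0))" by (rule tE_val)
  let ?q = "(2::real) powr (- 2 * s)"
  have q: "norm ?q < 1" using q_lt1[OF assms] by simp
  have "(\<lambda>m. ?q ^ m + (if m = 0 then 1 else 0)) sums (1 / (1 - ?q) + 1)"
    by (intro sums_add geometric_sums q) (rule sums_single[where f = "\<lambda>_. 1::real" and i = 0, simplified])
  then have "(\<lambda>m. 2 powr (2 * s * real_of_int i) * (?q ^ m + (if m = 0 then 1 else 0))) sums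
      (2 powr (2 * s * real_of_int i) * (1 / (1 - ?q) + 1))"
    by (rule sums_mult)
  moreover have "1 / (1 - ?q) + 1 = gamma2 s"
    unfolding gamma2_def by (rule aux_g2[OF q_lt1[OF assms]])
  ultimately show "(\<lambda>m. 2 powr (2 * s * real_of_int i) * (?q ^ m + (if m = 0 then 1 else 0))) sums
      (2 powr (2 * s * real_of_int i) * gamma2 s)" by simp
qed

definition LQ :: "int \<Rightarrow> int \<Rightarrow> real" where "LQ i j = (if i < j then 2 powr (- real_of_int j) else 0)"
definition tQ :: "real \<Rightarrow> int \<Rightarrow> int \<Rightarrow> real" where
  "tQ s i j = PhiQ s (2 powr (- real_of_int j)) * (LQ i j - LQ i (j + 1))"

lemma tQ_zero: "j < i \<Longrightarrow> tQ s i j = 0"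
  unfolding tQ_def LQ_def by simp

lemma tQ_val: "tQ s i (i + int m) = 2 powr (- 2 * s * real_of_int i) / 2 * ((2 powr (- 2 * s)) ^ m - (if m = 0 then 2 else 0))"
proof (cases "m = 0")
  case True
  have "LQ i i - LQ i (i + 1) = - (2 powr (- real_of_int i) / 2)"
    unfolding LQ_def by (simp only: if_not_P[OF less_irrefl] if_P[OF less_add_one] p2_succ)
  then have "tQ s i i = - (2 powr (real_of_int i * (1 - 2 * s)) * 2 powr (- real_of_int i)) / 2"
    unfolding tQ_def PhiQ_val by simp
  also have "2 powr (real_of_int i * (1 - 2 * s)) * 2 powr (- real_of_int i) = (2::real) powr (- 2 * s * real_of_int i)"
    unfolding p2_mult by (simp add: algebra_simps)
  finally show ?thesis using True by simp
next
  case False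
  let ?j = "i + int m"
  have lt: "i < ?j" "i < ?j + 1" using False by auto
  have "LQ i ?j - LQ i (?j + 1) = 2 powr (- real_of_int ?j) - 2 powr (- real_of_int ?j) / 2"
    unfolding LQ_def by (simp only: if_P[OF lt(1)] if_P[OF lt(2)] p2_succ)
  also have "\<dots> = 2 powr (- real_of_int ?j) / 2" by simp
  finally have "LQ i ?j - LQ i (?j + 1) = 2 powr (- real_of_int ?j) / 2" .
  then have "tQ s i ?j = 2 powr (real_of_int ?j * (1 - 2 * s)) * 2 powr (- real_of_int ?j) / 2"
    unfolding tQ_def PhiQ_val by simp
  also have "2 powr (real_of_int ?j * (1 - 2 * s)) * 2 powr (- real_of_int ?j) = (2::real) powr (- 2 * s * real_of_int i + (- 2 * s * real m))"
    unfolding p2_mult by (simp add: algebra_simps)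
  also have "\<dots> = 2 powr (- 2 * s * real_of_int i) * (2 powr (- 2 * s)) ^ m"
    unfolding q_pow p2_mult ..
  finally show ?thesis using False by simp
qed

lemma Q_series: assumes "0 < s"
  shows "(\<lambda>n. \<Sum>j\<in>{- int n..int n}. tQ s i j) \<longlonglongrightarrow> 2 powr (- 2 * s * real_of_int i) * gamma1 s"
proof (rule two_sided_left[where t = "tQ s i" and Jc = i and f = "\<lambda>m. 2 powr (- 2 * s * real_of_int i) / 2 * ((2 powr (- 2 * s)) ^ m - (if m = 0 then 2 else 0))"])
  show "\<And>j. j < i \<Longrightarrow> tQ s i j = 0" by (rule tQ_zero)
  show "\<And>m. tQ s i (i + int m) = 2 powr (- 2 * s * real_of_int i) / 2 * ((2 powr (- 2 * s)) ^ m - (if m = 0 then 2 else 0))" by (rule tQ_val)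
  let ?q = "(2::real) powr (- 2 * s)"
  have q: "norm ?q < 1" using q_lt1[OF assms] by simp
  have "(\<lambda>m. ?q ^ m - (if m = 0 then 2 else 0)) sums (1 / (1 - ?q) - 2)"
    by (intro sums_diff geometric_sums q) (rule sums_single[where f = "\<lambda>_. 2::real" and i = 0, simplified])
  then have "(\<lambda>m. 2 powr (- 2 * s * real_of_int i) / 2 * (?q ^ m - (if m = 0 then 2 else 0))) sums
      (2 powr (- 2 * s * real_of_int i) / 2 * (1 / (1 - ?q) - 2))"
    by (rule sums_mult)
  moreover have "2 powr (- 2 * s * real_of_int i) / 2 * (1 / (1 - ?q) - 2) = 2 powr (- 2 * s * real_of_int i) * gamma1 s"
  proof -
    have e: "(2::real) powr (1 - 2 * s) = 2 * ?q" by (simp add: powr_diff powr_minus divide_inverse)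
    show ?thesis unfolding gamma1_def e by (rule aux_g1[OF q_lt1[OF assms]])
  qed
  ultimately show "(\<lambda>m. 2 powr (- 2 * s * real_of_int i) / 2 * (?q ^ m - (if m = 0 then 2 else 0))) sums
      (2 powr (- 2 * s * real_of_int i) * gamma1 s)" by simp
qed

definition LPj :: "int \<Rightarrow> int \<Rightarrow> real" where
  "LPj N j = (if - N \<le> j then 2 powr (- real_of_int j) * 2 powr real_of_int N else 2 powr real_of_int N * 2 powr real_of_int N)"
definition tP :: "real \<Rightarrow> int \<Rightarrow> int \<Rightarrow> real" where
  "tP s N j = PhiQ s (2 powr (- real_of_int j)) * (LPj N j - LPj N (j + 1))"

lemma tP_zero: assumes "j < - N" shows "tP s N j = 0"
proof (cases "j + 1 = - N")
  case True
  then have "real_of_int (j + 1) = - real_of_int N" by linarith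
  then show ?thesis unfolding tP_def LPj_def using assms True by simp
next
  case False
  then show ?thesis unfolding tP_def LPj_def using assms by simp
qed

lemma tP_val: "tP s N (- N + int m) = 2 powr real_of_int N / 2 * 2 powr (2 * s * real_of_int N) * (2 powr (- 2 * s)) ^ m"
proof -
  let ?j = "- N + int m"
  have le: "- N \<le> ?j" "- N \<le> ?j + 1" by auto
  have "LPj N ?j - LPj N (?j + 1) = 2 powr (- real_of_int ?j) * 2 powr real_of_int N - 2 powr (- real_of_int ?j) / 2 * 2 powr real_of_int N"
    unfolding LPj_def by (simp only: if_P[OF le(1)] if_P[OF le(2)] p2_succ)
  also have "\<dots> = 2 powr real_of_int N * (2 powr (- real_of_int ?j) / 2)" by (simp add: algebra_simps)
  finally have "LPj N ?j - LPj N (?j + 1) = 2 powr real_of_int N * (2 powr (- real_of_int ?j) / 2)" .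
  then have "tP s N ?j = 2 powr real_of_int N / 2 * (2 powr (real_of_int ?j * (1 - 2 * s)) * 2 powr (- real_of_int ?j))"
    unfolding tP_def PhiQ_val by simp
  also have "2 powr (real_of_int ?j * (1 - 2 * s)) * 2 powr (- real_of_int ?j) = (2::real) powr (2 * s * real_of_int N + (- 2 * s * real m))"
    unfolding p2_mult by (simp add: algebra_simps)
  also have "\<dots> = 2 powr (2 * s * real_of_int N) * (2 powr (- 2 * s)) ^ m"
    unfolding q_pow p2_mult ..
  finally show ?thesis by simp
qed

lemma P_series: assumes "0 < s"
  shows "(\<lambda>n. \<Sum>j\<in>{- int n..int n}. tP s N j) \<longlonglongrightarrow> 2 powr real_of_int N / 2 * 2 powr (2 * s * real_of_int N) * (1 / (1 - 2 powr (- 2 * s)))"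
proof (rule two_sided_left[where t = "tP s N" and Jc = "- N" and f = "\<lambda>m. 2 powr real_of_int N / 2 * 2 powr (2 * s * real_of_int N) * (2 powr (- 2 * s)) ^ m"])
  show "\<And>j. j < - N \<Longrightarrow> tP s N j = 0" by (rule tP_zero)
  show "\<And>m. tP s N (- N + int m) = 2 powr real_of_int N / 2 * 2 powr (2 * s * real_of_int N) * (2 powr (- 2 * s)) ^ m" by (rule tP_val)
  have q: "norm ((2::real) powr (- 2 * s)) < 1" using q_lt1[OF assms] by simp
  show "(\<lambda>m. 2 powr real_of_int N / 2 * 2 powr (2 * s * real_of_int N) * (2 powr (- 2 * s)) ^ m) sums
    (2 powr real_of_int N / 2 * 2 powr (2 * s * real_of_int N) * (1 / (1 - 2 powr (- 2 * s))))"
    by (intro sums_mult geometric_sums q)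
qed


lemma PhiE_nn: "0 \<le> PhiE s (2 powr (- real_of_int j))" unfolding PhiE_val by simp
lemma PhiQ_nn: "0 \<le> PhiQ s (2 powr (- real_of_int j))" unfolding PhiQ_val by simp

lemma Gh_meas[measurable]: "Gh i k i' k' \<in> borel_measurable borel"
  unfolding Gh_def[abs_def] borel_prod[symmetric] by measurable

lemma Gh_sq_nn: "0 \<le> Gh i k i k z" unfolding Gh_def by simp

lemma abs_mult_le_sq: "\<bar>u * v\<bar> \<le> u * u + v * (v::real)"
proof -
  have "0 \<le> (\<bar>u\<bar> - \<bar>v\<bar>) * (\<bar>u\<bar> - \<bar>v\<bar>)" by simp
  also have "\<dots> = \<bar>u\<bar> * \<bar>u\<bar> + \<bar>v\<bar> * \<bar>v\<bar> - 2 * (\<bar>u\<bar> * \<bar>v\<bar>)" by (simp add: algebra_simps)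
  also have "\<bar>u\<bar> * \<bar>u\<bar> = u * u" by (rule abs_mult_self_eq)
  also have "\<bar>v\<bar> * \<bar>v\<bar> = v * v" by (rule abs_mult_self_eq)
  finally have h1: "2 * (\<bar>u\<bar> * \<bar>v\<bar>) \<le> u * u + v * v" by simp
  have h2: "0 \<le> \<bar>u\<bar> * \<bar>v\<bar>" by simp
  have h3: "\<bar>u * v\<bar> = \<bar>u\<bar> * \<bar>v\<bar>" by (rule abs_mult)
  from h1 h2 h3 show ?thesis by linarith
qed

lemma Gh_bound: "\<bar>Gh i k i' k' z\<bar> \<le> Gh i k i k z + Gh i' k' i' k' z"
  unfolding Gh_def by (rule abs_mult_le_sq)

lemma L_Gh_same: "(LINT z:S j|lborel. Gh i k i k z) = LE i j"
  unfolding L_Gh LE_def by simp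

lemma psum_E_same: "(\<Sum>j\<in>{- int n..int n}. PhiE s (2 powr (- real_of_int j)) *
    ((LINT z:S j|lborel. Gh i k i k z) - (LINT z:S (j + 1)|lborel. Gh i k i k z))) = (\<Sum>j\<in>{- int n..int n}. tE s i j)"
  unfolding L_Gh_same tE_def ..

lemma E_dom_integrable: assumes "0 < s"
  shows "set_integrable lborel R0 (\<lambda>z. (Gh i k i k z + Gh i' k' i' k' z) * PhiE s (dd z))"
proof (rule pos_R0)
  show "0 \<le> Gh i k i k z + Gh i' k' i' k' z" for z using Gh_sq_nn[of i k z] Gh_sq_nn[of i' k' z] by simp
  show "0 \<le> PhiE s (2 powr (- real_of_int j))" for j by (rule PhiE_nn)
  show "set_integrable lborel (S j) (\<lambda>z. Gh i k i k z + Gh i' k' i' k' z)" for j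
    by (intro set_integral_add Gh_integrable)
  have e: "(\<Sum>j\<in>{- int n..int n}. PhiE s (2 powr (- real_of_int j)) *
      ((LINT z:S j|lborel. Gh i k i k z + Gh i' k' i' k' z) - (LINT z:S (j + 1)|lborel. Gh i k i k z + Gh i' k' i' k' z)))
     = (\<Sum>j\<in>{- int n..int n}. tE s i j) + (\<Sum>j\<in>{- int n..int n}. tE s i' j)" for n
    unfolding set_integral_add(2)[OF Gh_integrable Gh_integrable] L_Gh_same tE_def sum.distrib[symmetric]
    by (rule sum.cong) (auto simp: algebra_simps)
  show "(\<lambda>n. \<Sum>j\<in>{- int n..int n}. PhiE s (2 powr (- real_of_int j)) *
      ((LINT z:S j|lborel. Gh i k i k z + Gh i' k' i' k' z) - (LINT z:S (j + 1)|lborel. Gh i k i k z + Gh i' k' i' k' z)))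
     \<longlonglongrightarrow> 2 powr (2 * s * real_of_int i) * gamma2 s + 2 powr (2 * s * real_of_int i') * gamma2 s"
    unfolding e by (intro tendsto_add E_series assms)
qed

lemma E_pair_integrable: assumes "0 < s"
  shows "set_integrable lborel R0 (\<lambda>z. Gh i k i' k' z * PhiE s (dd z))"
  by (rule integrable_R0[OF Gh_meas Gh_bound PhiE_nn E_dom_integrable[OF assms]])

lemma E_pair_value: assumes "0 < s"
  shows "(LINT z:R0|lborel. Gh i k i' k' z * PhiE s (dd z)) =
     (if (i, k) = (i', k') then 2 powr (2 * s * real_of_int i) * gamma2 s else 0)"
proof -
  have lim: "(\<lambda>n. \<Sum>j\<in>{- int n..int n}. PhiE s (2 powr (- real_of_int j)) *
      ((LINT z:S j|lborel. Gh i k i' k' z) - (LINT z:S (j + 1)|lborel. Gh i k i' k' z)))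
     \<longlonglongrightarrow> (LINT z:R0|lborel. Gh i k i' k' z * PhiE s (dd z))"
    by (rule level_limit[OF Gh_integrable E_pair_integrable[OF assms]])
  show ?thesis
  proof (cases "(i, k) = (i', k')")
    case True
    then have ii: "i' = i" "k' = k" by auto
    have "(\<lambda>n. \<Sum>j\<in>{- int n..int n}. tE s i j) \<longlonglongrightarrow> (LINT z:R0|lborel. Gh i k i' k' z * PhiE s (dd z))"
      using lim unfolding ii psum_E_same .
    with E_series[OF assms, of i] have "(LINT z:R0|lborel. Gh i k i' k' z * PhiE s (dd z)) = 2 powr (2 * s * real_of_int i) * gamma2 s"
      by (rule LIMSEQ_unique[rotated])
    then show ?thesis using True by simp
  next
    case False
    have "(LINT z:S j|lborel. Gh i k i' k' z) = 0" for j unfolding L_Gh using False by auto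
    then have "(\<lambda>n. 0::real) \<longlonglongrightarrow> (LINT z:R0|lborel. Gh i k i' k' z * PhiE s (dd z))"
      using lim by simp
    then have "(LINT z:R0|lborel. Gh i k i' k' z * PhiE s (dd z)) = 0"
      by (rule LIMSEQ_unique[OF _ tendsto_const])
    then show ?thesis using False by auto
  qed
qed

definition Gq :: "int \<Rightarrow> nat \<Rightarrow> int \<Rightarrow> nat \<Rightarrow> real \<times> real \<Rightarrow> real" where
  "Gq i k i' k' z = hr i k (fst z) * hr i' k' (snd z)"

lemma Gq_meas[measurable]: "Gq i k i' k' \<in> borel_measurable borel"
  unfolding Gq_def[abs_def] borel_prod[symmetric] by measurable

lemma Gq_integrable: "set_integrable lborel (S j) (Gq i k i' k')"
  unfolding Gq_def[abs_def] by (rule int_hh_fs)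

lemma common_supp: obtains N where "supp_in N (hr i k)" "supp_in N (hr i' k')"
proof -
  obtain N1 where N1: "supp_in N1 (hr i k)" using hr_supp_in[of i k] by blast
  obtain N2 where N2: "supp_in N2 (hr i' k')" using hr_supp_in[of i' k'] by blast
  have "supp_in (max N1 N2) (hr i k)" by (rule supp_in_mono[OF N1]) simp
  moreover have "supp_in (max N1 N2) (hr i' k')" by (rule supp_in_mono[OF N2]) simp
  ultimately show ?thesis by (rule that)
qed

lemma Gq_bound: assumes "supp_in N (hr i k)" "supp_in N (hr i' k')"
  shows "\<bar>Gq i k i' k' z\<bar> \<le> 2 powr (real_of_int i / 2) * 2 powr (real_of_int i' / 2) * Pj N z"
proof (cases "Gq i k i' k' z = 0")
  case True then show ?thesis unfolding Pj_def by (simp add: indicator_def)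
next
  case False
  then have "hr i k (fst z) \<noteq> 0" "hr i' k' (snd z) \<noteq> 0" unfolding Gq_def by auto
  then have "fst z \<in> dyad (- N) 0" "snd z \<in> dyad (- N) 0" using supp_in_dyad assms by blast+
  then have "Pj N z = 1" unfolding Pj_def by simp
  then show ?thesis unfolding Gq_def using hr_bound2 by simp
qed

lemma Q_dom_integrable: assumes "0 < s"
  shows "set_integrable lborel R0 (\<lambda>z. (C * Pj N z) * PhiQ s (dd z))"
proof -
  have "set_integrable lborel R0 (\<lambda>z. Pj N z * PhiQ s (dd z))"
  proof (rule pos_R0)
    show "0 \<le> Pj N z" for z unfolding Pj_def by simp
    show "0 \<le> PhiQ s (2 powr (- real_of_int j))" for j by (rule PhiQ_nn)
    show "set_integrable lborel (S j) (Pj N)" for j by (rule Pj_integrable)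
    have e: "(\<Sum>j\<in>{- int n..int n}. PhiQ s (2 powr (- real_of_int j)) *
      ((LINT z:S j|lborel. Pj N z) - (LINT z:S (j + 1)|lborel. Pj N z))) = (\<Sum>j\<in>{- int n..int n}. tP s N j)" for n
      unfolding L_Pj tP_def LPj_def ..
    show "(\<lambda>n. \<Sum>j\<in>{- int n..int n}. PhiQ s (2 powr (- real_of_int j)) *
      ((LINT z:S j|lborel. Pj N z) - (LINT z:S (j + 1)|lborel. Pj N z))) \<longlonglongrightarrow>
      2 powr real_of_int N / 2 * 2 powr (2 * s * real_of_int N) * (1 / (1 - 2 powr (- 2 * s)))"
      unfolding e by (rule P_series[OF assms])
  qed
  then have "set_integrable lborel R0 (\<lambda>z. C * (Pj N z * PhiQ s (dd z)))"
    by (rule set_integrable_mult_right)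
  then show ?thesis by (simp add: mult.assoc)
qed

lemma Q_pair_integrable: assumes "0 < s"
  shows "set_integrable lborel R0 (\<lambda>z. Gq i k i' k' z * PhiQ s (dd z))"
proof -
  obtain N where N: "supp_in N (hr i k)" "supp_in N (hr i' k')" by (rule common_supp)
  show ?thesis
    by (rule integrable_R0[OF Gq_meas Gq_bound[OF N] PhiQ_nn Q_dom_integrable[OF assms]])
qed

lemma L_Gq: "(LINT z:S j|lborel. Gq i k i' k' z) = (if (i, k) = (i', k') \<and> i < j then 2 powr (- real_of_int j) else 0)"
  unfolding Gq_def by (rule L_mixed)

lemma Q_pair_value: assumes "0 < s"
  shows "(LINT z:R0|lborel. Gq i k i' k' z * PhiQ s (dd z)) =
     (if (i, k) = (i', k') then 2 powr (- 2 * s * real_of_int i) * gamma1 s else 0)"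
proof -
  have lim: "(\<lambda>n. \<Sum>j\<in>{- int n..int n}. PhiQ s (2 powr (- real_of_int j)) *
      ((LINT z:S j|lborel. Gq i k i' k' z) - (LINT z:S (j + 1)|lborel. Gq i k i' k' z)))
     \<longlonglongrightarrow> (LINT z:R0|lborel. Gq i k i' k' z * PhiQ s (dd z))"
    by (rule level_limit[OF Gq_integrable Q_pair_integrable[OF assms]])
  show ?thesis
  proof (cases "(i, k) = (i', k')")
    case True
    then have ii: "i' = i" "k' = k" by auto
    have e: "(\<Sum>j\<in>{- int n..int n}. PhiQ s (2 powr (- real_of_int j)) *
      ((LINT z:S j|lborel. Gq i k i k z) - (LINT z:S (j + 1)|lborel. Gq i k i k z))) = (\<Sum>j\<in>{- int n..int n}. tQ s i j)" for n
      unfolding L_Gq tQ_def LQ_def by simp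
    have "(\<lambda>n. \<Sum>j\<in>{- int n..int n}. tQ s i j) \<longlonglongrightarrow> (LINT z:R0|lborel. Gq i k i' k' z * PhiQ s (dd z))"
      using lim unfolding ii e .
    with Q_series[OF assms, of i] have "(LINT z:R0|lborel. Gq i k i' k' z * PhiQ s (dd z)) = 2 powr (- 2 * s * real_of_int i) * gamma1 s"
      by (rule LIMSEQ_unique[rotated])
    then show ?thesis using True by simp
  next
    case False
    have "(LINT z:S j|lborel. Gq i k i' k' z) = 0" for j unfolding L_Gq using False by auto
    then have "(\<lambda>n. 0::real) \<longlonglongrightarrow> (LINT z:R0|lborel. Gq i k i' k' z * PhiQ s (dd z))"
      using lim by simp
    then have "(LINT z:R0|lborel. Gq i k i' k' z * PhiQ s (dd z)) = 0"
      by (rule LIMSEQ_unique[OF _ tendsto_const])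
    then show ?thesis using False by auto
  qed
qed


definition Qp :: "(real \<times> real) set" where "Qp = {0<..} \<times> {0<..}"

definition EI :: "real \<Rightarrow> (real \<Rightarrow> complex) \<Rightarrow> (real \<Rightarrow> complex) \<Rightarrow> real \<times> real \<Rightarrow> complex" where
  "EI s \<phi> \<psi> z = ((\<phi> (fst z) - \<phi> (snd z)) * (cnj (\<psi> (fst z)) - cnj (\<psi> (snd z))))
       / complex_of_real (ddist (fst z) (snd z) powr (2 * s))
       / complex_of_real (ddist (fst z) (snd z))"

definition QI :: "real \<Rightarrow> (real \<Rightarrow> complex) \<Rightarrow> (real \<Rightarrow> complex) \<Rightarrow> real \<times> real \<Rightarrow> complex" where
  "QI s \<phi> \<psi> z = complex_of_real (ddist (fst z) (snd z) powr (2 * s)) * \<phi> (fst z) * cnj (\<psi> (snd z))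
       / complex_of_real (ddist (fst z) (snd z))"

lemma Eform_EI: "Eform s \<phi> \<psi> = (LINT z:Qp|lborel. EI s \<phi> \<psi> z)"
  unfolding Eform_def EI_def Qp_def ..

lemma Qform_QI: "Qform s \<phi> \<psi> = (LINT z:Qp|lborel. QI s \<phi> \<psi> z)"
  unfolding Qform_def QI_def Qp_def ..

lemma EI_haar: "EI s (haar i k) (haar i' k') z = complex_of_real (Gh i k i' k' z * PhiE s (dd z))"
  unfolding EI_def haar_eq Gh_def PhiE_def dd_def by simp

lemma QI_haar: "QI s (haar i k) (haar i' k') z = complex_of_real (Gq i k i' k' z * PhiQ s (dd z))"
  unfolding QI_def haar_eq Gq_def PhiQ_def dd_def by simp

lemma R0_Qp: "R0 \<subseteq> Qp" unfolding R0_def Qp_def by auto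

lemma Qp_diag: "z \<in> Qp \<Longrightarrow> z \<notin> R0 \<Longrightarrow> dd z = 0"
  unfolding Qp_def R0_def dd_def by (auto intro: ddist_diag)

lemma PhiE_0: "PhiE s 0 = 0" unfolding PhiE_def by simp
lemma PhiQ_0: "PhiQ s 0 = 0" unfolding PhiQ_def by simp

lemma ind_Qp_R0:
  fixes g :: "real \<times> real \<Rightarrow> real"
  assumes "\<And>z. z \<in> Qp \<Longrightarrow> z \<notin> R0 \<Longrightarrow> g z = 0"
  shows "(\<lambda>z. indicator Qp z *\<^sub>R g z) = (\<lambda>z. indicator R0 z *\<^sub>R g z)"
proof
  fix z show "indicator Qp z *\<^sub>R g z = indicator R0 z *\<^sub>R g z"
    using assms[of z] R0_Qp by (cases "z \<in> R0"; cases "z \<in> Qp") (auto simp: indicator_def)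
qed

lemma Qp_R0_int:
  fixes g :: "real \<times> real \<Rightarrow> real"
  assumes "\<And>z. z \<in> Qp \<Longrightarrow> z \<notin> R0 \<Longrightarrow> g z = 0" "set_integrable lborel R0 g"
  shows "set_integrable lborel Qp (\<lambda>z. complex_of_real (g z))"
    and "(LINT z:Qp|lborel. complex_of_real (g z)) = complex_of_real (LINT z:R0|lborel. g z)"
proof -
  have e: "(\<lambda>z. indicator Qp z *\<^sub>R complex_of_real (g z)) = (\<lambda>z. complex_of_real (indicator R0 z *\<^sub>R g z))"
  proof
    fix z
    have a: "indicator Qp z *\<^sub>R g z = indicator R0 z *\<^sub>R g z" by (rule fun_cong[OF ind_Qp_R0[OF assms(1)]])
    have b: "indicator Qp z *\<^sub>R complex_of_real (g z) = complex_of_real (indicator Qp z *\<^sub>R g z)"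
      by (simp add: scaleR_conv_of_real)
    show "indicator Qp z *\<^sub>R complex_of_real (g z) = complex_of_real (indicator R0 z *\<^sub>R g z)"
      unfolding b a ..
  qed
  have "integrable lborel (\<lambda>z. indicator R0 z *\<^sub>R g z)" using assms(2) unfolding set_integrable_def .
  then show "set_integrable lborel Qp (\<lambda>z. complex_of_real (g z))"
    unfolding set_integrable_def e by (rule integrable_of_real)
  show "(LINT z:Qp|lborel. complex_of_real (g z)) = complex_of_real (LINT z:R0|lborel. g z)"
    unfolding set_lebesgue_integral_def e by (rule integral_complex_of_real)
qed

lemma E_haar_int: assumes "0 < s" shows "set_integrable lborel Qp (EI s (haar i k) (haar i' k'))"
  unfolding EI_haar[abs_def]
  by (rule Qp_R0_int(1)) (use Qp_diag PhiE_0 E_pair_integrable[OF assms] in auto)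

lemma Q_haar_int: assumes "0 < s" shows "set_integrable lborel Qp (QI s (haar i k) (haar i' k'))"
  unfolding QI_haar[abs_def]
  by (rule Qp_R0_int(1)) (use Qp_diag PhiQ_0 Q_pair_integrable[OF assms] in auto)

lemma E_haar: assumes "0 < s"
  shows "Eform s (haar i k) (haar i' k') = complex_of_real (if (i, k) = (i', k') then 2 powr (2 * s * real_of_int i) * gamma2 s else 0)"
proof -
  have "Eform s (haar i k) (haar i' k') = complex_of_real (LINT z:R0|lborel. Gh i k i' k' z * PhiE s (dd z))"
    unfolding Eform_EI EI_haar
    by (rule Qp_R0_int(2)) (use Qp_diag PhiE_0 E_pair_integrable[OF assms] in auto)
  then show ?thesis unfolding E_pair_value[OF assms] .
qed

lemma Q_haar: assumes "0 < s"
  shows "Qform s (haar i k) (haar i' k') = complex_of_real (if (i, k) = (i', k') then 2 powr (- 2 * s * real_of_int i) * gamma1 s else 0)"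
proof -
  have "Qform s (haar i k) (haar i' k') = complex_of_real (LINT z:R0|lborel. Gq i k i' k' z * PhiQ s (dd z))"
    unfolding Qform_QI QI_haar
    by (rule Qp_R0_int(2)) (use Qp_diag PhiQ_0 Q_pair_integrable[OF assms] in auto)
  then show ?thesis unfolding Q_pair_value[OF assms] .
qed


lemma diff_sum_c: "(\<Sum>a\<in>F. c a * f a x) - (\<Sum>a\<in>F. c a * f a y) = (\<Sum>a\<in>F. c a * (f a x - f a y :: complex))"
  by (simp add: sum_subtractf[symmetric] right_diff_distrib)

lemma cnj_diff_sum_c: "cnj (\<Sum>a\<in>F. c a * f a x) - cnj (\<Sum>a\<in>F. c a * f a y) = (\<Sum>a\<in>F. cnj (c a) * (cnj (f a x) - cnj (f a y)))"
  by (simp add: sum_subtractf[symmetric] right_diff_distrib)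

lemma EI_sum: "EI s (\<lambda>x. \<Sum>a\<in>F. c a * f a x) (\<lambda>x. \<Sum>a\<in>F. c a * f a x) z =
   (\<Sum>a\<in>F. \<Sum>b\<in>F. (c a * cnj (c b)) * EI s (f a) (f b) z)"
proof -
  define P where "P = complex_of_real (ddist (fst z) (snd z) powr (2 * s))"
  define R where "R = complex_of_real (ddist (fst z) (snd z))"
  have "EI s (\<lambda>x. \<Sum>a\<in>F. c a * f a x) (\<lambda>x. \<Sum>a\<in>F. c a * f a x) z =
     (\<Sum>a\<in>F. c a * (f a (fst z) - f a (snd z))) * (\<Sum>b\<in>F. cnj (c b) * (cnj (f b (fst z)) - cnj (f b (snd z)))) / P / R"
    unfolding EI_def P_def R_def diff_sum_c cnj_diff_sum_c ..
  also have "\<dots> = (\<Sum>a\<in>F. \<Sum>b\<in>F. (c a * (f a (fst z) - f a (snd z))) * (cnj (c b) * (cnj (f b (fst z)) - cnj (f b (snd z)))) / P / R)"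
    unfolding sum_product sum_divide_distrib ..
  also have "\<dots> = (\<Sum>a\<in>F. \<Sum>b\<in>F. (c a * cnj (c b)) * EI s (f a) (f b) z)"
    unfolding EI_def P_def[symmetric] R_def[symmetric] by (intro sum.cong refl) (simp add: algebra_simps)
  finally show ?thesis .
qed

lemma QI_sum: "QI s (\<lambda>x. \<Sum>a\<in>F. c a * f a x) (\<lambda>x. \<Sum>a\<in>F. c a * f a x) z =
   (\<Sum>a\<in>F. \<Sum>b\<in>F. (c a * cnj (c b)) * QI s (f a) (f b) z)"
proof -
  define P where "P = complex_of_real (ddist (fst z) (snd z) powr (2 * s))"
  define R where "R = complex_of_real (ddist (fst z) (snd z))"
  have "QI s (\<lambda>x. \<Sum>a\<in>F. c a * f a x) (\<lambda>x. \<Sum>a\<in>F. c a * f a x) z =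
     P * ((\<Sum>a\<in>F. c a * f a (fst z)) * (\<Sum>b\<in>F. cnj (c b) * cnj (f b (snd z)))) / R"
    unfolding QI_def P_def R_def by (simp add: mult.assoc)
  also have "\<dots> = P * (\<Sum>a\<in>F. \<Sum>b\<in>F. (c a * f a (fst z)) * (cnj (c b) * cnj (f b (snd z)))) / R"
    unfolding sum_product ..
  also have "\<dots> = (\<Sum>a\<in>F. \<Sum>b\<in>F. P * ((c a * f a (fst z)) * (cnj (c b) * cnj (f b (snd z)))) / R)"
    by (simp add: sum_distrib_left sum_divide_distrib)
  also have "\<dots> = (\<Sum>a\<in>F. \<Sum>b\<in>F. (c a * cnj (c b)) * QI s (f a) (f b) z)"
    unfolding QI_def P_def[symmetric] R_def[symmetric] by (intro sum.cong refl) (simp add: algebra_simps)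
  finally show ?thesis .
qed

lemma set_int_dsum:
  fixes h :: "'a \<Rightarrow> 'a \<Rightarrow> real \<times> real \<Rightarrow> complex"
  assumes fin: "finite F" and I: "\<And>a b. a \<in> F \<Longrightarrow> b \<in> F \<Longrightarrow> set_integrable lborel X (h a b)"
  shows "(LINT z:X|lborel. (\<Sum>a\<in>F. \<Sum>b\<in>F. K a b * h a b z)) = (\<Sum>a\<in>F. \<Sum>b\<in>F. K a b * (LINT z:X|lborel. h a b z))"
proof -
  have e: "indicator X z *\<^sub>R (\<Sum>a\<in>F. \<Sum>b\<in>F. K a b * h a b z) = (\<Sum>a\<in>F. \<Sum>b\<in>F. K a b * (indicator X z *\<^sub>R h a b z))" for z
    by (simp add: scaleR_sum_right)
  have Ii: "integrable lborel (\<lambda>z. K a b * (indicator X z *\<^sub>R h a b z))" if "a \<in> F" "b \<in> F" for a b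
    using I[OF that] unfolding set_integrable_def by (rule integrable_mult_right)
  have "(LINT z:X|lborel. (\<Sum>a\<in>F. \<Sum>b\<in>F. K a b * h a b z)) = (LINT z|lborel. (\<Sum>a\<in>F. \<Sum>b\<in>F. K a b * (indicator X z *\<^sub>R h a b z)))"
    unfolding set_lebesgue_integral_def e ..
  also have "\<dots> = (\<Sum>a\<in>F. LINT z|lborel. (\<Sum>b\<in>F. K a b * (indicator X z *\<^sub>R h a b z)))"
    by (rule Bochner_Integration.integral_sum) (use Ii in \<open>auto intro!: Bochner_Integration.integrable_sum\<close>)
  also have "\<dots> = (\<Sum>a\<in>F. \<Sum>b\<in>F. LINT z|lborel. K a b * (indicator X z *\<^sub>R h a b z))"
    by (intro sum.cong refl Bochner_Integration.integral_sum) (use Ii in auto)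
  also have "\<dots> = (\<Sum>a\<in>F. \<Sum>b\<in>F. K a b * (LINT z:X|lborel. h a b z))"
    unfolding set_lebesgue_integral_def by (intro sum.cong refl integral_mult_right_zero)
  finally show ?thesis .
qed

definition hh :: "int \<times> nat \<Rightarrow> real \<Rightarrow> complex" where "hh a = haar (fst a) (snd a)"

lemma SH_form: "(\<lambda>x. \<Sum>(j, k)\<in>F. c (j, k) * haar j k x) = (\<lambda>x. \<Sum>a\<in>F. c a * hh a x)"
  unfolding hh_def by (simp add: case_prod_beta)

lemma delta_sum: assumes "finite F" "a \<in> F"
  shows "(\<Sum>b\<in>F. K b * complex_of_real (if a = b then w else 0)) = K a * complex_of_real w"
proof -
  have "(\<Sum>b\<in>F. K b * complex_of_real (if a = b then w else 0)) = (\<Sum>b\<in>F. if b = a then K b * complex_of_real w else 0)"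
    by (intro sum.cong refl) auto
  also have "\<dots> = K a * complex_of_real w" using assms by (simp add: sum.delta)
  finally show ?thesis .
qed

lemma mult_cnj_cmod: "z * cnj z = complex_of_real ((cmod z)\<^sup>2)"
  by (simp add: complex_mult_cnj cmod_power2)

lemma hh_eq_iff: "(fst a, snd a) = (fst b, snd b) \<longleftrightarrow> a = b" by (simp add: prod_eq_iff)

lemma E_SH_value: assumes s: "0 < s" and fin: "finite F"
  shows "Eform s (\<lambda>x. \<Sum>a\<in>F. c a * hh a x) (\<lambda>x. \<Sum>a\<in>F. c a * hh a x) =
     (\<Sum>a\<in>F. complex_of_real ((cmod (c a))\<^sup>2 * (2 powr (2 * s * real_of_int (fst a)) * gamma2 s)))"
proof -
  have "Eform s (\<lambda>x. \<Sum>a\<in>F. c a * hh a x) (\<lambda>x. \<Sum>a\<in>F. c a * hh a x) =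
      (LINT z:Qp|lborel. (\<Sum>a\<in>F. \<Sum>b\<in>F. (c a * cnj (c b)) * EI s (hh a) (hh b) z))"
    unfolding Eform_EI EI_sum ..
  also have "\<dots> = (\<Sum>a\<in>F. \<Sum>b\<in>F. (c a * cnj (c b)) * (LINT z:Qp|lborel. EI s (hh a) (hh b) z))"
    by (rule set_int_dsum[OF fin]) (simp add: hh_def E_haar_int[OF s])
  also have "\<dots> = (\<Sum>a\<in>F. \<Sum>b\<in>F. (c a * cnj (c b)) * complex_of_real (if a = b then 2 powr (2 * s * real_of_int (fst a)) * gamma2 s else 0))"
    unfolding Eform_EI[symmetric] hh_def E_haar[OF s] hh_eq_iff ..
  also have "\<dots> = (\<Sum>a\<in>F. (c a * cnj (c a)) * complex_of_real (2 powr (2 * s * real_of_int (fst a)) * gamma2 s))"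
    by (intro sum.cong refl delta_sum[OF fin])
  also have "\<dots> = (\<Sum>a\<in>F. complex_of_real ((cmod (c a))\<^sup>2 * (2 powr (2 * s * real_of_int (fst a)) * gamma2 s)))"
    unfolding mult_cnj_cmod by simp
  finally show ?thesis .
qed

lemma Q_SH_value: assumes s: "0 < s" and fin: "finite F"
  shows "Qform s (\<lambda>x. \<Sum>a\<in>F. c a * hh a x) (\<lambda>x. \<Sum>a\<in>F. c a * hh a x) =
     (\<Sum>a\<in>F. complex_of_real ((cmod (c a))\<^sup>2 * (2 powr (- 2 * s * real_of_int (fst a)) * gamma1 s)))"
proof -
  have "Qform s (\<lambda>x. \<Sum>a\<in>F. c a * hh a x) (\<lambda>x. \<Sum>a\<in>F. c a * hh a x) =
      (LINT z:Qp|lborel. (\<Sum>a\<in>F. \<Sum>b\<in>F. (c a * cnj (c b)) * QI s (hh a) (hh b) z))"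
    unfolding Qform_QI QI_sum ..
  also have "\<dots> = (\<Sum>a\<in>F. \<Sum>b\<in>F. (c a * cnj (c b)) * (LINT z:Qp|lborel. QI s (hh a) (hh b) z))"
    by (rule set_int_dsum[OF fin]) (simp add: hh_def Q_haar_int[OF s])
  also have "\<dots> = (\<Sum>a\<in>F. \<Sum>b\<in>F. (c a * cnj (c b)) * complex_of_real (if a = b then 2 powr (- 2 * s * real_of_int (fst a)) * gamma1 s else 0))"
    unfolding Qform_QI[symmetric] hh_def Q_haar[OF s] hh_eq_iff ..
  also have "\<dots> = (\<Sum>a\<in>F. (c a * cnj (c a)) * complex_of_real (2 powr (- 2 * s * real_of_int (fst a)) * gamma1 s))"
    by (intro sum.cong refl delta_sum[OF fin])
  also have "\<dots> = (\<Sum>a\<in>F. complex_of_real ((cmod (c a))\<^sup>2 * (2 powr (- 2 * s * real_of_int (fst a)) * gamma1 s)))"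
    unfolding mult_cnj_cmod by simp
  finally show ?thesis .
qed


lemma hr_prod_integrable: "integrable lborel (\<lambda>x. hr i k x * hr i' k' x)"
proof (rule Bochner_Integration.integrable_bound)
  let ?C = "2 powr (real_of_int i / 2) * 2 powr (real_of_int i' / 2)"
  have "integrable lborel (indicator (dyad i k) :: real \<Rightarrow> real)"
    by (intro integrable_real_indicator fin_sub_dyad[of _ i k]) auto
  then show "integrable lborel (\<lambda>x. ?C * indicator (dyad i k) x)" by (rule integrable_mult_right)
  show "(\<lambda>x. hr i k x * hr i' k' x) \<in> borel_measurable lborel" by simp
  show "AE x in lborel. norm (hr i k x * hr i' k' x) \<le> norm (?C * indicator (dyad i k) x)"
  proof (rule AE_I2)
    fix x
    show "norm (hr i k x * hr i' k' x) \<le> norm (?C * indicator (dyad i k) x)"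
    proof (cases "hr i k x = 0")
      case True then show ?thesis by simp
    next
      case False
      then have "x \<in> dyad i k" by (rule hr_supp)
      then show ?thesis using hr_bound2[of i k x i' k' x] by simp
    qed
  qed
qed

lemma hr_pos: "hr i k x \<noteq> 0 \<Longrightarrow> 0 < x"
  using hr_supp[of i k x] by (simp add: mem_dyad)

lemma ipR_haar_form: "ipR (hh a) (haar j k) = (LINT x:{0<..}|lborel. complex_of_real (hr (fst a) (snd a) x * hr j k x))"
  unfolding ipR_def hh_def haar_eq by simp

lemma Ipos_eq: "(\<lambda>x. indicator {0<..} x *\<^sub>R (hr i k x * hr i' k' x)) = (\<lambda>x. hr i k x * hr i' k' x)"
proof
  fix x show "indicator {0<..} x *\<^sub>R (hr i k x * hr i' k' x) = hr i k x * hr i' k' x"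
    using hr_pos[of i k x] by (cases "0 < x") (auto simp: indicator_def)
qed

lemma ipR_hh_haar: "ipR (hh a) (haar j k) = (if a = (j, k) then 1 else 0)"
proof -
  have "ipR (hh a) (haar j k) = complex_of_real (LINT x:{0<..}|lborel. hr (fst a) (snd a) x * hr j k x)"
    unfolding ipR_haar_form by (rule set_integral_complex_of_real)
  also have "(LINT x:{0<..}|lborel. hr (fst a) (snd a) x * hr j k x) = (LBINT x. hr (fst a) (snd a) x * hr j k x)"
    unfolding set_lebesgue_integral_def Ipos_eq ..
  also have "\<dots> = (if (fst a, snd a) = (j, k) then 1 else 0)" by (rule hr_ortho)
  finally show ?thesis by (simp add: prod_eq_iff)
qed

lemma ipR_int: "set_integrable lborel {0<..} (\<lambda>x. hh a x * cnj (haar j k x))"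
proof -
  have e: "(\<lambda>x. indicator {0<..} x *\<^sub>R (hh a x * cnj (haar j k x))) =
      (\<lambda>x. complex_of_real (indicator {0<..} x *\<^sub>R (hr (fst a) (snd a) x * hr j k x)))"
    unfolding hh_def haar_eq by (auto simp: fun_eq_iff scaleR_conv_of_real)
  show ?thesis unfolding set_integrable_def e by (intro integrable_of_real) (unfold Ipos_eq, rule hr_prod_integrable)
qed

lemma set_int_sum:
  fixes h :: "'a \<Rightarrow> real \<Rightarrow> complex"
  assumes fin: "finite F" and I: "\<And>a. a \<in> F \<Longrightarrow> set_integrable lborel X (h a)"
  shows "(LINT z:X|lborel. (\<Sum>a\<in>F. K a * h a z)) = (\<Sum>a\<in>F. K a * (LINT z:X|lborel. h a z))"
proof -
  have e: "indicator X z *\<^sub>R (\<Sum>a\<in>F. K a * h a z) = (\<Sum>a\<in>F. K a * (indicator X z *\<^sub>R h a z))" for z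
    by (simp add: scaleR_sum_right)
  have Ii: "integrable lborel (\<lambda>z. K a * (indicator X z *\<^sub>R h a z))" if "a \<in> F" for a
    using I[OF that] unfolding set_integrable_def by (rule integrable_mult_right)
  have "(LINT z:X|lborel. (\<Sum>a\<in>F. K a * h a z)) = (LINT z|lborel. (\<Sum>a\<in>F. K a * (indicator X z *\<^sub>R h a z)))"
    unfolding set_lebesgue_integral_def e ..
  also have "\<dots> = (\<Sum>a\<in>F. LINT z|lborel. K a * (indicator X z *\<^sub>R h a z))"
    by (rule Bochner_Integration.integral_sum) (use Ii in auto)
  also have "\<dots> = (\<Sum>a\<in>F. K a * (LINT z:X|lborel. h a z))"
    unfolding set_lebesgue_integral_def by (intro sum.cong refl integral_mult_right_zero)
  finally show ?thesis .
qed

lemma ipR_SH: assumes fin: "finite F"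
  shows "ipR (\<lambda>x. \<Sum>a\<in>F. c a * hh a x) (haar j k) = (if (j, k) \<in> F then c (j, k) else 0)"
proof -
  have "ipR (\<lambda>x. \<Sum>a\<in>F. c a * hh a x) (haar j k) = (LINT x:{0<..}|lborel. (\<Sum>a\<in>F. c a * (hh a x * cnj (haar j k x))))"
    unfolding ipR_def by (simp add: sum_distrib_right mult.assoc)
  also have "\<dots> = (\<Sum>a\<in>F. c a * ipR (hh a) (haar j k))"
    unfolding ipR_def by (rule set_int_sum[OF fin ipR_int])
  also have "\<dots> = (\<Sum>a\<in>F. if a = (j, k) then c a else 0)"
    unfolding ipR_hh_haar by (intro sum.cong refl) auto
  also have "\<dots> = (if (j, k) \<in> F then c (j, k) else 0)" using fin by (simp add: sum.delta')
  finally show ?thesis .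
qed

lemma infsum_SH:
  assumes fin: "finite F" and ip: "\<And>j k. ip j k = (if (j, k) \<in> F then c (j, k) else 0)"
    and g0: "\<And>j. g j 0 = (0::real)"
  shows "(\<Sum>\<^sub>\<infinity>(j,k)\<in>(UNIV :: (int \<times> nat) set). g j ((cmod (ip j k))\<^sup>2)) = (\<Sum>a\<in>F. g (fst a) ((cmod (c a))\<^sup>2))"
proof -
  have "(\<Sum>\<^sub>\<infinity>(j,k)\<in>(UNIV :: (int \<times> nat) set). g j ((cmod (ip j k))\<^sup>2)) = (\<Sum>\<^sub>\<infinity>a\<in>F. g (fst a) ((cmod (c a))\<^sup>2))"
  proof (rule infsum_cong_neutral)
    fix x :: "int \<times> nat" assume "x \<in> UNIV - F"
    then show "(case x of (j, k) \<Rightarrow> g j ((cmod (ip j k))\<^sup>2)) = 0" using ip g0 by (cases x) auto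
  next
    fix x :: "int \<times> nat" assume "x \<in> F - UNIV" then show "g (fst x) ((cmod (c x))\<^sup>2) = 0" by simp
  next
    fix x :: "int \<times> nat" assume "x \<in> UNIV \<inter> F"
    then show "(case x of (j, k) \<Rightarrow> g j ((cmod (ip j k))\<^sup>2)) = g (fst x) ((cmod (c x))\<^sup>2)" using ip by (cases x) auto
  qed
  also have "\<dots> = (\<Sum>a\<in>F. g (fst a) ((cmod (c a))\<^sup>2))" by (rule infsum_finite[OF fin])
  finally show ?thesis .
qed

lemma dlen_E: "y / dlen j powr (2 * s) = y * 2 powr (2 * s * real_of_int j)"
proof -
  have "dlen j powr (2 * s) = 2 powr (- real_of_int j * (2 * s))" unfolding dlen_def powr_powr ..
  then have "y / dlen j powr (2 * s) = y * 2 powr (- (- real_of_int j * (2 * s)))"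
    by (simp add: divide_powr_uminus)
  then show ?thesis by (simp add: algebra_simps)
qed

lemma dlen_Q: "dlen j powr (2 * s) = 2 powr (- 2 * s * real_of_int j)"
proof -
  have "dlen j powr (2 * s) = 2 powr (- real_of_int j * (2 * s))" unfolding dlen_def powr_powr ..
  then show ?thesis by (simp add: algebra_simps)
qed

theorem lemma2p6:
  fixes s :: real
  assumes "0 < s" and "s < 1/2"
  shows "(\<forall>j k j' k'. (j, k) \<noteq> (j', k') \<longrightarrow> Eform s (haar j k) (haar j' k') = 0)
       \<and> (\<forall>j k j' k'. (j, k) \<noteq> (j', k') \<longrightarrow> Qform s (haar j k) (haar j' k') = 0)
       \<and> (\<forall>\<phi>\<in>SH. Eform s \<phi> \<phi> = complex_of_real (gamma2 s *
            (\<Sum>\<^sub>\<infinity>(j,k)\<in>(UNIV :: (int \<times> nat) set). (cmod (ipR \<phi> (haar j k)))\<^sup>2 / dlen j powr (2 * s))))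
       \<and> (\<forall>\<phi>\<in>SH. Qform s \<phi> \<phi> = complex_of_real (gamma1 s *
            (\<Sum>\<^sub>\<infinity>(j,k)\<in>(UNIV :: (int \<times> nat) set). dlen j powr (2 * s) * (cmod (ipR \<phi> (haar j k)))\<^sup>2)))"
proof (intro conjI allI impI ballI)
  fix j j' :: int and k k' :: nat assume ne: "(j, k) \<noteq> (j', k')"
  show "Eform s (haar j k) (haar j' k') = 0" unfolding E_haar[OF assms(1)] using ne by auto
  show "Qform s (haar j k) (haar j' k') = 0" unfolding Q_haar[OF assms(1)] using ne by auto
next
  fix \<phi> assume "\<phi> \<in> SH"
  then obtain F c where fin: "finite F" and phi: "\<phi> = (\<lambda>x. \<Sum>(j, k)\<in>F. c (j, k) * haar j k x)"
    unfolding SH_def by blast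
  have phi': "\<phi> = (\<lambda>x. \<Sum>a\<in>F. c a * hh a x)" unfolding phi SH_form ..
  have ip: "\<And>j k. ipR \<phi> (haar j k) = (if (j, k) \<in> F then c (j, k) else 0)"
    unfolding phi' by (rule ipR_SH[OF fin])
  have sE: "(\<Sum>\<^sub>\<infinity>(j,k)\<in>(UNIV :: (int \<times> nat) set). (cmod (ipR \<phi> (haar j k)))\<^sup>2 / dlen j powr (2 * s)) =
      (\<Sum>a\<in>F. (cmod (c a))\<^sup>2 / dlen (fst a) powr (2 * s))"
    by (rule infsum_SH[OF fin ip, where g = "\<lambda>j y. y / dlen j powr (2 * s)"]) simp
  have sQ: "(\<Sum>\<^sub>\<infinity>(j,k)\<in>(UNIV :: (int \<times> nat) set). dlen j powr (2 * s) * (cmod (ipR \<phi> (haar j k)))\<^sup>2) =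
      (\<Sum>a\<in>F. dlen (fst a) powr (2 * s) * (cmod (c a))\<^sup>2)"
    by (rule infsum_SH[OF fin ip, where g = "\<lambda>j y. dlen j powr (2 * s) * y"]) simp
  have sE': "(\<Sum>a\<in>F. (cmod (c a))\<^sup>2 / dlen (fst a) powr (2 * s)) = (\<Sum>a\<in>F. (cmod (c a))\<^sup>2 * 2 powr (2 * s * real_of_int (fst a)))"
    by (intro sum.cong refl dlen_E)
  have sQ': "(\<Sum>a\<in>F. dlen (fst a) powr (2 * s) * (cmod (c a))\<^sup>2) = (\<Sum>a\<in>F. (cmod (c a))\<^sup>2 * 2 powr (- 2 * s * real_of_int (fst a)))"
    by (intro sum.cong refl) (simp add: dlen_Q)
  show "Eform s \<phi> \<phi> = complex_of_real (gamma2 s *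
            (\<Sum>\<^sub>\<infinity>(j,k)\<in>(UNIV :: (int \<times> nat) set). (cmod (ipR \<phi> (haar j k)))\<^sup>2 / dlen j powr (2 * s)))"
    unfolding sE sE' unfolding phi' E_SH_value[OF assms(1) fin] sum_distrib_left of_real_sum
    by (intro sum.cong refl arg_cong[where f = complex_of_real]) (simp add: mult_ac)
  show "Qform s \<phi> \<phi> = complex_of_real (gamma1 s *
            (\<Sum>\<^sub>\<infinity>(j,k)\<in>(UNIV :: (int \<times> nat) set). dlen j powr (2 * s) * (cmod (ipR \<phi> (haar j k)))\<^sup>2))"
    unfolding sQ sQ' unfolding phi' Q_SH_value[OF assms(1) fin] sum_distrib_left of_real_sum
    by (intro sum.cong refl arg_cong[where f = complex_of_real]) (simp add: mult_ac)
qed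

end
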